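(* (Multivariate Covering Lemma.) Let $k\ge 1$ and let $(U,V_0,V_1,\dots,V_k)$ be random variables on finite alphabets with joint pmf $p_{U,V_{[0:k]}}$. For each $j\in[1:k]$ let $\mathcal{A}_j\subseteq[1:j-1]$, where the sets satisfy: if $i\in\mathcal{A}_j$ then $\mathcal{A}_i\subseteq\mathcal{A}_j$. Let $r_1,\dots,r_k\ge 0$. For each $n$, let $(U^n,V_0^n)$ be a pair of random sequences with some joint distribution $p_{U^n,V_0^n}$, and generate a random codebook as follows: for each $j\in[1:k]$ and each $m_{\mathcal{A}_j}\in\prod_{i\in\mathcal{A}_j}[1:2^{nr_i}]$, let $V_j^n(m_{\mathcal{A}_j},m_j)$, $m_j\in[1:2^{nr_j}]$, be pairwise conditionally independent random sequences, each distributed according to $\prod_{i=1}^n p_{V_j|V_{\mathcal{A}_j},V_0}(v_{j,i}\mid v_{\mathcal{A}_j,i}(m_{\mathcal{A}_j}),v_{0,i})$, where $v_{\mathcal{A}_j}^n(m_{\mathcal{A}_j})$ denotes the previously generated codewords $(V_i^n(m_{\mathcal{A}_i},m_i))_{i\in\mathcal{A}_j}$ and $v_0^n$ is the realization of $V_0^n$; the codebook is generated conditionally on $V_0^n$ only, i.e., it is conditionally independent of $U^n$ given $V_0^n$. Write $V_{[1:k]}^n(m_{[1:k]})=(V_j^n(m_{\mathcal{A}_j},m_j))_{j\in[1:k]}$. Let $0<\epsilon'<\epsilon$. If $\lim_{n\to\infty}\mathbb{P}((U^n,V_0^n)\in\mathcal{T}_{\epsilon'}^{(n)}(U,V_0))=1$,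 then there exists $\delta(\epsilon)$, tending to $0$ as $\epsilon\to0$, such that $$\lim_{n\to\infty}\mathbb{P}\big((U^n,V_0^n,V_{[1:k]}^n(m_{[1:k]}))\in\mathcal{T}_\epsilon^{(n)}\text{ for some }m_{[1:k]}\big)=1$$ whenever $\sum_{j\in\mathcal{J}}r_j>\sum_{j\in\mathcal{J}}H(V_j\mid V_{\mathcal{A}_j}V_0)-H(V_{\mathcal{J}}\mid V_0U)+\delta(\epsilon)$ for all nonempty $\mathcal{J}\subseteq[1:k]$ such that $j\in\mathcal{J}$ implies $\mathcal{A}_j\subseteq\mathcal{J}$.
   Context: $[i:j]$ denotes $\{\lfloor i\rfloor,\lfloor i\rfloor+1,\dots,\lfloor j\rfloor\}$ and $X_{\mathcal{A}}=(X_j:j\in\mathcal{A})$. For a random variable $X\sim p_X$ on a finite alphabet $\mathcal{X}$ and $\epsilon\in(0,1)$, the typical set is $\mathcal{T}_\epsilon^{(n)}(X)=\{x^n:\big|\,|\{i:x_i=x\}|/n-p_X(x)\big|\le\epsilon p_X(x)\text{ for all }x\in\mathcal{X}\}$; for tuples of sequences it is taken with respect to the joint pmf of the corresponding tuple of random variables (here the joint pmf $p_{U,V_{[0:k]}}$ and its marginals). *)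

theory Defs
  imports "HOL-Probability.Probability"
begin

(* Random variables: U takes values in 'u, V_0,...,V_k take values in 'v.
   The joint pmf p is a pmf on 'u \<times> (nat \<Rightarrow> 'v); V_j = snd x j for j \<in> {0..k};
   components j > k are ignored (everything is restricted to {0..k}).
   Sequences of length n are functions nat \<Rightarrow> _, only positions i < n matter. *)

definition typical :: "'a pmf \<Rightarrow> real \<Rightarrow> nat \<Rightarrow> (nat \<Rightarrow> 'a) set" where
  "typical q eps n =
     {x. \<forall>a. \<bar>real (card {i. i < n \<and> x i = a}) / real n - pmf q a\<bar> \<le> eps * pmf q a}"

definition entropy_pmf :: "'a pmf \<Rightarrow> real" where
  "entropy_pmf q = - (\<Sum>x\<in>set_pmf q. pmf q x * log 2 (pmf q x))"

definition marg_UV :: "('u \<times> (nat \<Rightarrow> 'v)) pmf \<Rightarrow> nat set \<Rightarrow> ('u \<times> (nat \<Rightarrow> 'v)) pmf" where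
  "marg_UV p S = map_pmf (\<lambda>(u, v). (u, restrict v S)) p"

definition marg_V :: "('u \<times> (nat \<Rightarrow> 'v)) pmf \<Rightarrow> nat set \<Rightarrow> (nat \<Rightarrow> 'v) pmf" where
  "marg_V p S = map_pmf (\<lambda>(u, v). restrict v S) p"

definition cond_ent_j :: "('u \<times> (nat \<Rightarrow> 'v)) pmf \<Rightarrow> (nat \<Rightarrow> nat set) \<Rightarrow> nat \<Rightarrow> real" where
  "cond_ent_j p A j = entropy_pmf (marg_V p (insert j (insert 0 (A j))))
                      - entropy_pmf (marg_V p (insert 0 (A j)))"

definition cond_ent_J :: "('u \<times> (nat \<Rightarrow> 'v)) pmf \<Rightarrow> nat set \<Rightarrow> real" where
  "cond_ent_J p J = entropy_pmf (marg_UV p (insert 0 J)) - entropy_pmf (marg_UV p {0})"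

(* conditional pmf p_{V_j | V_B, V_0}( . | w_B, v0).  Convention: if the conditioning
   event has probability 0, the (unconditional) marginal of V_j is used. *)
definition cond_V :: "('u \<times> (nat \<Rightarrow> 'v)) pmf \<Rightarrow> nat set \<Rightarrow> nat \<Rightarrow> (nat \<Rightarrow> 'v) \<Rightarrow> 'v \<Rightarrow> 'v pmf" where
  "cond_V p B j w v0 =
     (let E = {x. (\<forall>a\<in>B. snd x a = w a) \<and> snd x 0 = v0}
      in if set_pmf p \<inter> E \<noteq> {} then map_pmf (\<lambda>x. snd x j) (cond_pmf p E)
         else map_pmf (\<lambda>x. snd x j) p)"

(* [1:2^{nr}] = {1 .. floor(2^{nr})} *)
definition num_msgs :: "real \<Rightarrow> nat \<Rightarrow> nat" where
  "num_msgs r n = nat \<lfloor>2 powr (real n * r)\<rfloor>"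

(* codebook: c j m i = i-th symbol of V_j^n(m), where m is a function on A_j \<union> {j},
   i.e. the index (m_{A_j}, m_j) *)
type_synonym 'v codebook = "nat \<Rightarrow> (nat \<Rightarrow> nat) \<Rightarrow> nat \<Rightarrow> 'v"

definition idx :: "(nat \<Rightarrow> nat set) \<Rightarrow> (nat \<Rightarrow> nat) \<Rightarrow> nat \<Rightarrow> (nat \<Rightarrow> nat) set" where
  "idx A L j = PiE (insert j (A j)) (\<lambda>i. {1..L i})"

definition msgs :: "(nat \<Rightarrow> nat) \<Rightarrow> nat \<Rightarrow> (nat \<Rightarrow> nat) set" where
  "msgs L k = PiE {1..k} (\<lambda>j. {1..L j})"

definition gen_level :: "('u \<times> (nat \<Rightarrow> 'v)) pmf \<Rightarrow> (nat \<Rightarrow> nat set) \<Rightarrow> (nat \<Rightarrow> nat) \<Rightarrow> nat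
    \<Rightarrow> nat \<Rightarrow> (nat \<Rightarrow> 'v) \<Rightarrow> 'v codebook \<Rightarrow> 'v codebook pmf" where
  "gen_level p A L n j vs c =
     map_pmf (\<lambda>f. c(j := (\<lambda>m i. f (m, i))))
       (Pi_pmf (idx A L j \<times> {..<n}) undefined
          (\<lambda>(m, i). cond_V p (A j) j (\<lambda>a. c a (restrict m (insert a (A a))) i) (vs i)))"

fun canon_cb :: "('u \<times> (nat \<Rightarrow> 'v)) pmf \<Rightarrow> (nat \<Rightarrow> nat set) \<Rightarrow> (nat \<Rightarrow> nat) \<Rightarrow> nat
    \<Rightarrow> (nat \<Rightarrow> 'v) \<Rightarrow> nat \<Rightarrow> 'v codebook pmf" where
  "canon_cb p A L n vs 0 = return_pmf (\<lambda>j m i. undefined)"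
| "canon_cb p A L n vs (Suc j) = canon_cb p A L n vs j \<bind> gen_level p A L n (Suc j) vs"

definition codewords :: "(nat \<Rightarrow> nat set) \<Rightarrow> nat \<Rightarrow> nat \<Rightarrow> 'v codebook \<Rightarrow> (nat \<Rightarrow> nat)
    \<Rightarrow> nat \<Rightarrow> nat \<Rightarrow> 'v" where
  "codewords A k n c m =
     restrict (\<lambda>j. restrict (c j (restrict m (insert j (A j)))) {..<n}) {1..k}"

definition joint_seq :: "(nat \<Rightarrow> nat set) \<Rightarrow> nat \<Rightarrow> (nat \<Rightarrow> 'u) \<Rightarrow> (nat \<Rightarrow> 'v) \<Rightarrow> 'v codebook
    \<Rightarrow> (nat \<Rightarrow> nat) \<Rightarrow> nat \<Rightarrow> 'u \<times> (nat \<Rightarrow> 'v)" where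
  "joint_seq A k us vs c m =
     (\<lambda>i. (us i, restrict (\<lambda>j. if j = 0 then vs i else c j (restrict m (insert j (A j))) i) {0..k}))"

end

theory Submission
  imports Defs
begin

lemma measure_cond_pmf':
  assumes "set_pmf p \<inter> s \<noteq> {}"
  shows "measure (measure_pmf (cond_pmf p s)) B = measure p (s \<inter> B) / measure p s"
proof -
  have "emeasure (measure_pmf p) s \<noteq> 0"
    using emeasure_measure_pmf_not_zero[OF assms] .
  then show ?thesis
    by (simp add: cond_pmf.rep_eq[OF assms] measure_pmf.emeasure_eq_measure)
qed

lemma finite_set_marg_UV:
  fixes p :: "('u::finite \<times> (nat \<Rightarrow> 'v::finite)) pmf"
  assumes "finite S"
  shows "finite (set_pmf (marg_UV p S))"
proof -
  have "set_pmf (marg_UV p S) \<subseteq> UNIV \<times> PiE S (\<lambda>_. UNIV)"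
    by (auto simp: marg_UV_def)
  moreover have "finite ((UNIV::'u set) \<times> PiE S (\<lambda>_. (UNIV::'v set)))"
    using assms by (intro finite_cartesian_product finite_PiE) auto
  ultimately show ?thesis by (rule finite_subset)
qed

lemma marg_UV_sub:
  assumes "S \<subseteq> T"
  shows "marg_UV p S = map_pmf (\<lambda>a. (fst a, restrict (snd a) S)) (marg_UV p T)"
  unfolding marg_UV_def map_pmf_comp
  using assms by (intro map_pmf_cong refl) (auto simp: restrict_def fun_eq_iff)

lemma marg_V_sub:
  assumes "S \<subseteq> T"
  shows "marg_V p S = map_pmf (\<lambda>a. restrict (snd a) S) (marg_UV p T)"
  unfolding marg_UV_def marg_V_def map_pmf_comp
  using assms by (intro map_pmf_cong refl) (auto simp: restrict_def fun_eq_iff)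

lemma pmf_map_finite:
  assumes "finite (set_pmf M)"
  shows "pmf (map_pmf f M) b = (\<Sum>a\<in>{a\<in>set_pmf M. f a = b}. pmf M a)"
proof -
  have "pmf (map_pmf f M) b = measure M (f -` {b})" by (simp add: pmf_map)
  also have "\<dots> = measure M (f -` {b} \<inter> set_pmf M)" by (simp add: measure_Int_set_pmf)
  also have "\<dots> = (\<Sum>a\<in>f -` {b} \<inter> set_pmf M. pmf M a)"
    using assms by (intro measure_measure_pmf_finite) auto
  also have "f -` {b} \<inter> set_pmf M = {a\<in>set_pmf M. f a = b}" by auto
  finally show ?thesis .
qed

lemma entropy_map:
  assumes fin: "finite (set_pmf M)"
  shows "entropy_pmf (map_pmf f M) = - (\<Sum>a\<in>set_pmf M. pmf M a * log 2 (pmf (map_pmf f M) (f a)))"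
proof -
  let ?g = "\<lambda>a. pmf M a * log 2 (pmf (map_pmf f M) (f a))"
  have "(\<Sum>a\<in>set_pmf M. ?g a) = (\<Sum>b\<in>f ` set_pmf M. \<Sum>a\<in>{a\<in>set_pmf M. f a = b}. ?g a)"
    using fin by (rule sum.image_gen)
  also have "\<dots> = (\<Sum>b\<in>f ` set_pmf M. (\<Sum>a\<in>{a\<in>set_pmf M. f a = b}. pmf M a) * log 2 (pmf (map_pmf f M) b))"
    by (intro sum.cong refl) (auto simp: sum_distrib_right)
  also have "\<dots> = (\<Sum>b\<in>set_pmf (map_pmf f M). pmf (map_pmf f M) b * log 2 (pmf (map_pmf f M) b))"
    by (simp add: pmf_map_finite[OF fin])
  finally show ?thesis by (simp add: entropy_pmf_def)
qed

definition prJ :: "nat set \<Rightarrow> 'u \<times> (nat \<Rightarrow> 'v) \<Rightarrow> 'u \<times> (nat \<Rightarrow> 'v)" where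
  "prJ J a = (fst a, restrict (snd a) (insert 0 J))"

definition rho :: "('u \<times> (nat \<Rightarrow> 'v)) pmf \<Rightarrow> nat \<Rightarrow> nat set \<Rightarrow> 'u \<times> (nat \<Rightarrow> 'v) \<Rightarrow> real" where
  "rho p k J a = pmf (marg_UV p {0..k}) a / pmf (marg_UV p (insert 0 J)) (prJ J a)"

definition lam :: "('u \<times> (nat \<Rightarrow> 'v)) pmf \<Rightarrow> (nat \<Rightarrow> nat set) \<Rightarrow> nat \<Rightarrow> (nat \<Rightarrow> 'v) \<Rightarrow> real" where
  "lam p A l w = pmf (cond_V p (A l) l w (w 0)) (w l)"

definition fJ :: "('u \<times> (nat \<Rightarrow> 'v)) pmf \<Rightarrow> (nat \<Rightarrow> nat set) \<Rightarrow> nat \<Rightarrow> nat set \<Rightarrow> 'u \<times> (nat \<Rightarrow> 'v) \<Rightarrow> real" where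
  "fJ p A k J a = (\<Sum>l\<in>{1..k}-J. log 2 (lam p A l (snd a))) - log 2 (rho p k J a)"

lemma set_marg_UV: "a \<in> set_pmf (marg_UV p S) \<longleftrightarrow> (\<exists>x\<in>set_pmf p. a = (fst x, restrict (snd x) S))"
  by (auto simp: marg_UV_def case_prod_unfold)

lemma pJ_map:
  assumes "J \<subseteq> {1..k}"
  shows "marg_UV p (insert 0 J) = map_pmf (prJ J) (marg_UV p {0..k})"
  unfolding prJ_def using assms by (intro marg_UV_sub) auto

lemma pmf_pJ_pos:
  assumes "J \<subseteq> {1..k}" "a \<in> set_pmf (marg_UV p {0..k})"
  shows "pmf (marg_UV p (insert 0 J)) (prJ J a) > 0"
  using assms by (simp add: pJ_map pmf_positive)

lemma rho_pos:
  assumes "J \<subseteq> {1..k}" "a \<in> set_pmf (marg_UV p {0..k})"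
  shows "rho p k J a > 0"
  using pmf_pJ_pos[OF assms] assms(2) unfolding rho_def by (simp add: pmf_positive)

lemma measure_restrict_eq:
  "measure_pmf.prob p {x. restrict (snd x) S = r} = pmf (marg_V p S) r"
  by (simp add: marg_V_def pmf_map case_prod_unfold vimage_def)

lemma lam_eq:
  fixes p :: "('u::finite \<times> (nat \<Rightarrow> 'v::finite)) pmf"
  assumes a: "a \<in> set_pmf (marg_UV p {0..k})" and l: "l \<in> {1..k}" and Al: "A l \<subseteq> {1..k}"
  defines "S1 \<equiv> insert l (insert 0 (A l))" and "S2 \<equiv> insert 0 (A l)"
  shows "lam p A l (snd a) = pmf (marg_V p S1) (restrict (snd a) S1) / pmf (marg_V p S2) (restrict (snd a) S2)"
    and "pmf (marg_V p S1) (restrict (snd a) S1) > 0"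
    and "pmf (marg_V p S2) (restrict (snd a) S2) > 0"
proof -
  obtain x0 where x0: "x0 \<in> set_pmf p" "a = (fst x0, restrict (snd x0) {0..k})"
    using a by (auto simp: set_marg_UV)
  define w where "w = snd a"
  have S1k: "S1 \<subseteq> {0..k}" and S2k: "S2 \<subseteq> {0..k}" using l Al by (auto simp: S1_def S2_def)
  have rw: "restrict (snd x0) S = restrict w S" if "S \<subseteq> {0..k}" for S
    using that x0 by (auto simp: w_def restrict_def fun_eq_iff)
  define E :: "('u \<times> (nat \<Rightarrow> 'v)) set" where "E = {x. (\<forall>b\<in>A l. snd x b = w b) \<and> snd x 0 = w 0}"
  have E_eq: "E = {x. restrict (snd x) S2 = restrict w S2}"
    by (auto simp: E_def S2_def restrict_def fun_eq_iff; metis insertCI)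
  have E1_eq: "E \<inter> {x. snd x l = w l} = {x. restrict (snd x) S1 = restrict w S1}"
    by (auto simp: E_def S1_def restrict_def fun_eq_iff; metis insertCI)
  have x0E: "x0 \<in> E" using rw[OF S2k] unfolding E_eq by simp
  hence ne: "set_pmf p \<inter> E \<noteq> {}" using x0 by auto
  have "lam p A l (snd a) = pmf (map_pmf (\<lambda>x. snd x l) (cond_pmf p E)) (w l)"
    unfolding lam_def cond_V_def Let_def using ne by (simp add: w_def E_def)
  also have "\<dots> = measure_pmf.prob p (E \<inter> {x. snd x l = w l}) / measure_pmf.prob p E"
    by (simp add: pmf_map measure_cond_pmf'[OF ne] vimage_def)
  also have "\<dots> = pmf (marg_V p S1) (restrict w S1) / pmf (marg_V p S2) (restrict w S2)"
    unfolding E1_eq by (simp add: E_eq measure_restrict_eq)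
  finally show "lam p A l (snd a) = pmf (marg_V p S1) (restrict (snd a) S1) / pmf (marg_V p S2) (restrict (snd a) S2)"
    by (simp add: w_def)
  have "restrict (snd x0) S1 \<in> set_pmf (marg_V p S1)" using x0 by (auto simp: marg_V_def case_prod_unfold)
  thus "pmf (marg_V p S1) (restrict (snd a) S1) > 0" using rw[OF S1k] by (simp add: w_def pmf_positive)
  have "restrict (snd x0) S2 \<in> set_pmf (marg_V p S2)" using x0 by (auto simp: marg_V_def case_prod_unfold)
  thus "pmf (marg_V p S2) (restrict (snd a) S2) > 0" using rw[OF S2k] by (simp add: w_def pmf_positive)
qed

lemma lam_pos:
  fixes p :: "('u::finite \<times> (nat \<Rightarrow> 'v::finite)) pmf"
  assumes a: "a \<in> set_pmf (marg_UV p {0..k})" and l: "l \<in> {1..k}" and Al: "A l \<subseteq> {1..k}"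
  shows "lam p A l (snd a) > 0"
  using lam_eq[of a p k l A] assms by simp

lemma E_lam:
  fixes p :: "('u::finite \<times> (nat \<Rightarrow> 'v::finite)) pmf"
  assumes l: "l \<in> {1..k}" and Al: "A l \<subseteq> {1..k}"
  shows "(\<Sum>a\<in>set_pmf (marg_UV p {0..k}). pmf (marg_UV p {0..k}) a * log 2 (lam p A l (snd a)))
           = - cond_ent_j p A l"
proof -
  define S1 where "S1 = insert l (insert 0 (A l))"
  define S2 where "S2 = insert 0 (A l)"
  let ?F = "marg_UV p {0..k}"
  have fin: "finite (set_pmf ?F)" by (rule finite_set_marg_UV) auto
  have S1k: "S1 \<subseteq> {0..k}" and S2k: "S2 \<subseteq> {0..k}" using l Al by (auto simp: S1_def S2_def)
  have "(\<Sum>a\<in>set_pmf ?F. pmf ?F a * log 2 (lam p A l (snd a)))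
      = (\<Sum>a\<in>set_pmf ?F. pmf ?F a * log 2 (pmf (marg_V p S1) (restrict (snd a) S1))
                         - pmf ?F a * log 2 (pmf (marg_V p S2) (restrict (snd a) S2)))"
  proof (intro sum.cong refl)
    fix a assume a: "a \<in> set_pmf ?F"
    show "pmf ?F a * log 2 (lam p A l (snd a)) = pmf ?F a * log 2 (pmf (marg_V p S1) (restrict (snd a) S1))
                         - pmf ?F a * log 2 (pmf (marg_V p S2) (restrict (snd a) S2))"
      using lam_eq[of a p k l A] a l Al unfolding S1_def S2_def
      by (simp add: log_divide right_diff_distrib)
  qed
  also have "\<dots> = - entropy_pmf (marg_V p S1) + entropy_pmf (marg_V p S2)"
    unfolding sum_subtractf marg_V_sub[OF S1k] marg_V_sub[OF S2k] entropy_map[OF fin] by simp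
  finally show ?thesis by (simp add: cond_ent_j_def S1_def S2_def)
qed

lemma E_pJ:
  fixes p :: "('u::finite \<times> (nat \<Rightarrow> 'v::finite)) pmf"
  assumes "J \<subseteq> {1..k}"
  shows "(\<Sum>a\<in>set_pmf (marg_UV p {0..k}). pmf (marg_UV p {0..k}) a * log 2 (pmf (marg_UV p (insert 0 J)) (prJ J a)))
           = - entropy_pmf (marg_UV p (insert 0 J))"
proof -
  have fin: "finite (set_pmf (marg_UV p {0..k}))" by (rule finite_set_marg_UV) auto
  show ?thesis unfolding pJ_map[OF assms] entropy_map[OF fin] by simp
qed

lemma fJ_diff:
  fixes p :: "('u::finite \<times> (nat \<Rightarrow> 'v::finite)) pmf"
  assumes J: "J \<subseteq> {1..k}" and Ak: "\<forall>j\<in>{1..k}. A j \<subseteq> {1..k}"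
    and a: "a \<in> set_pmf (marg_UV p {0..k})"
  shows "fJ p A k J a - fJ p A k {} a =
     - (\<Sum>l\<in>J. log 2 (lam p A l (snd a))) + log 2 (pmf (marg_UV p (insert 0 J)) (prJ J a))
     - log 2 (pmf (marg_UV p (insert 0 {})) (prJ {} a))"
proof -
  have s: "(\<Sum>l\<in>{1..k}. log 2 (lam p A l (snd a))) = (\<Sum>l\<in>{1..k}-J. log 2 (lam p A l (snd a))) + (\<Sum>l\<in>J. log 2 (lam p A l (snd a)))"
    using J by (metis add.commute finite_atLeastAtMost sum.subset_diff)
  have pos1: "pmf (marg_UV p {0..k}) a > 0" using a by (simp add: pmf_positive)
  have pos2: "pmf (marg_UV p (insert 0 J)) (prJ J a) > 0" by (rule pmf_pJ_pos[OF J a])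
  have pos3: "pmf (marg_UV p (insert 0 {})) (prJ {} a) > 0" by (rule pmf_pJ_pos[OF _ a]) auto
  show ?thesis
    unfolding fJ_def rho_def using s pos1 pos2 pos3 by (simp add: log_divide)
qed

lemma E1:
  fixes p :: "('u::finite \<times> (nat \<Rightarrow> 'v::finite)) pmf"
  assumes J: "J \<subseteq> {1..k}" and Ak: "\<forall>j\<in>{1..k}. A j \<subseteq> {1..k}"
  shows "(\<Sum>a\<in>set_pmf (marg_UV p {0..k}). pmf (marg_UV p {0..k}) a * (fJ p A k J a - fJ p A k {} a))
     = (\<Sum>j\<in>J. cond_ent_j p A j) - cond_ent_J p J"
proof -
  let ?F = "marg_UV p {0..k}"
  have "(\<Sum>a\<in>set_pmf ?F. pmf ?F a * (fJ p A k J a - fJ p A k {} a))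
    = (\<Sum>a\<in>set_pmf ?F. - (\<Sum>l\<in>J. pmf ?F a * log 2 (lam p A l (snd a)))
         + pmf ?F a * log 2 (pmf (marg_UV p (insert 0 J)) (prJ J a))
         - pmf ?F a * log 2 (pmf (marg_UV p (insert 0 {})) (prJ {} a)))"
    by (intro sum.cong refl, subst fJ_diff[OF J Ak], assumption)
       (simp add: algebra_simps sum_distrib_left)
  also have "\<dots> = - (\<Sum>l\<in>J. \<Sum>a\<in>set_pmf ?F. pmf ?F a * log 2 (lam p A l (snd a)))
     + (\<Sum>a\<in>set_pmf ?F. pmf ?F a * log 2 (pmf (marg_UV p (insert 0 J)) (prJ J a)))
     - (\<Sum>a\<in>set_pmf ?F. pmf ?F a * log 2 (pmf (marg_UV p (insert 0 {})) (prJ {} a)))"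
    by (simp add: sum_subtractf sum.distrib sum_negf sum.swap[of _ J])
  also have "(\<Sum>l\<in>J. \<Sum>a\<in>set_pmf ?F. pmf ?F a * log 2 (lam p A l (snd a))) = (\<Sum>l\<in>J. - cond_ent_j p A l)"
    using J Ak by (intro sum.cong refl E_lam) auto
  also have "(\<Sum>a\<in>set_pmf ?F. pmf ?F a * log 2 (pmf (marg_UV p (insert 0 J)) (prJ J a))) = - entropy_pmf (marg_UV p (insert 0 J))"
    by (rule E_pJ[OF J])
  also have "(\<Sum>a\<in>set_pmf ?F. pmf ?F a * log 2 (pmf (marg_UV p (insert 0 {})) (prJ {} a))) = - entropy_pmf (marg_UV p (insert 0 {}))"
    by (rule E_pJ) auto
  finally show ?thesis by (simp add: cond_ent_J_def sum_negf)
qed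

lemma typical_in_support:
  assumes "s \<in> typical M eps n" "i < n"
  shows "s i \<in> set_pmf M"
proof (rule ccontr)
  assume "s i \<notin> set_pmf M"
  hence z: "pmf M (s i) = 0" by (simp add: set_pmf_iff)
  have "\<bar>real (card {j. j < n \<and> s j = s i}) / real n - pmf M (s i)\<bar> \<le> eps * pmf M (s i)"
    using assms(1) by (auto simp: typical_def)
  moreover have "finite {j. j < n \<and> s j = s i}" by simp
  moreover have "i \<in> {j. j < n \<and> s j = s i}" using assms(2) by simp
  ultimately have "card {j. j < n \<and> s j = s i} > 0" using card_gt_0_iff by blast
  hence "real (card {j. j < n \<and> s j = s i}) / real n > 0" using assms(2) by simp
  thus False using \<open>\<bar>real (card {j. j < n \<and> s j = s i}) / real n - pmf M (s i)\<bar> \<le> eps * pmf M (s i)\<close> z by simp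
qed

lemma sum_by_count:
  fixes n :: nat
  assumes fin: "finite S" and sub: "\<And>i. i < n \<Longrightarrow> s i \<in> S"
  shows "(\<Sum>i<n. h (s i)) = (\<Sum>a\<in>S. real (card {i. i < n \<and> s i = a}) * h a)"
proof -
  have "(\<Sum>i<n. h (s i)) = (\<Sum>a\<in>S. \<Sum>i\<in>{i\<in>{..<n}. s i = a}. h (s i))"
    using sub by (intro sum.group[symmetric] fin finite_lessThan) auto
  also have "\<dots> = (\<Sum>a\<in>S. real (card {i. i < n \<and> s i = a}) * h a)"
  proof (intro sum.cong refl)
    fix a assume "a \<in> S"
    have "(\<Sum>i\<in>{i\<in>{..<n}. s i = a}. h (s i)) = (\<Sum>i\<in>{i\<in>{..<n}. s i = a}. h a)"
      by (intro sum.cong) auto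
    also have "{i\<in>{..<n}. s i = a} = {i. i < n \<and> s i = a}" by auto
    finally show "(\<Sum>i\<in>{i\<in>{..<n}. s i = a}. h (s i)) = real (card {i. i < n \<and> s i = a}) * h a" by simp
  qed
  finally show ?thesis .
qed

lemma typical_sum_bound:
  fixes h :: "'a \<Rightarrow> real"
  assumes fin: "finite (set_pmf M)" and s: "s \<in> typical M eps n" and n: "n > 0"
  shows "\<bar>(\<Sum>i<n. h (s i)) - real n * (\<Sum>a\<in>set_pmf M. pmf M a * h a)\<bar>
           \<le> real n * eps * (\<Sum>a\<in>set_pmf M. pmf M a * \<bar>h a\<bar>)"
proof -
  have eq: "(\<Sum>i<n. h (s i)) = (\<Sum>a\<in>set_pmf M. real (card {i. i < n \<and> s i = a}) * h a)"
    by (rule sum_by_count[OF fin]) (use typical_in_support[OF s] in auto)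
  have "\<bar>(\<Sum>a\<in>set_pmf M. real (card {i. i < n \<and> s i = a}) * h a) - real n * (\<Sum>a\<in>set_pmf M. pmf M a * h a)\<bar>
      = \<bar>\<Sum>a\<in>set_pmf M. (real (card {i. i < n \<and> s i = a}) - real n * pmf M a) * h a\<bar>"
    by (simp add: sum_subtractf sum_distrib_left algebra_simps)
  also have "\<dots> \<le> (\<Sum>a\<in>set_pmf M. \<bar>(real (card {i. i < n \<and> s i = a}) - real n * pmf M a) * h a\<bar>)"
    by (rule sum_abs)
  also have "\<dots> \<le> (\<Sum>a\<in>set_pmf M. real n * eps * (pmf M a * \<bar>h a\<bar>))"
  proof (intro sum_mono)
    fix a
    define c where "c = real (card {i. i < n \<and> s i = a})"
    have t: "\<bar>real (card {i. i < n \<and> s i = a}) / real n - pmf M a\<bar> \<le> eps * pmf M a"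
      using s by (auto simp: typical_def)
    have "\<bar>real (card {i. i < n \<and> s i = a}) - real n * pmf M a\<bar> = real n * \<bar>real (card {i. i < n \<and> s i = a}) / real n - pmf M a\<bar>"
      using n by (simp add: field_simps abs_mult[symmetric])
    also have "\<dots> \<le> real n * (eps * pmf M a)" using t by (intro mult_left_mono) auto
    finally have "\<bar>real (card {i. i < n \<and> s i = a}) - real n * pmf M a\<bar> \<le> real n * (eps * pmf M a)" .
    hence cc: "\<bar>c - real n * pmf M a\<bar> \<le> real n * (eps * pmf M a)" by (simp add: c_def)
    have "\<bar>(c - real n * pmf M a) * h a\<bar> = \<bar>c - real n * pmf M a\<bar> * \<bar>h a\<bar>" by (rule abs_mult)
    also have "\<dots> \<le> real n * (eps * pmf M a) * \<bar>h a\<bar>" using cc by (intro mult_right_mono) auto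
    also have "\<dots> = real n * eps * (pmf M a * \<bar>h a\<bar>)" by simp
    finally show "\<bar>(real (card {i. i < n \<and> s i = a}) - real n * pmf M a) * h a\<bar> \<le> real n * eps * (pmf M a * \<bar>h a\<bar>)"
      by (simp add: c_def)
  qed
  also have "\<dots> = real n * eps * (\<Sum>a\<in>set_pmf M. pmf M a * \<bar>h a\<bar>)" by (simp add: sum_distrib_left)
  finally show ?thesis using eq by simp
qed

lemma cond_V_cong:
  assumes "\<And>a. a \<in> B \<Longrightarrow> w a = w' a"
  shows "cond_V p B j w v0 = cond_V p B j w' v0"
  unfolding cond_V_def using assms by (simp cong: conj_cong)

lemma lam_cong:
  assumes "\<And>a. a \<in> insert 0 (insert l (A l)) \<Longrightarrow> w a = w' a"
  shows "lam p A l w = lam p A l w'"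
proof -
  have "cond_V p (A l) l w (w 0) = cond_V p (A l) l w' (w' 0)"
    using assms by (auto intro!: cond_V_cong)
  thus ?thesis unfolding lam_def using assms by simp
qed

locale cbpair =
  fixes p :: "('u::finite \<times> (nat \<Rightarrow> 'v::finite)) pmf"
    and A :: "nat \<Rightarrow> nat set" and k :: nat and L :: "nat \<Rightarrow> nat" and n :: nat
    and vs :: "nat \<Rightarrow> 'v" and m :: "nat \<Rightarrow> nat" and m' :: "nat \<Rightarrow> nat"
  assumes A_sub: "\<forall>j\<in>{1..k}. A j \<subseteq> {1..<j}"
    and A_cl: "\<forall>j\<in>{1..k}. \<forall>i\<in>A j. A i \<subseteq> A j"
    and m_in: "m \<in> msgs L k" and m'_in: "m' \<in> msgs L k"
begin

definition mr :: "nat \<Rightarrow> nat \<Rightarrow> nat" where "mr l = restrict m (insert l (A l))"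
definition mr' :: "nat \<Rightarrow> nat \<Rightarrow> nat" where "mr' l = restrict m' (insert l (A l))"

definition row :: "nat \<Rightarrow> (nat \<Rightarrow> nat) \<Rightarrow> 'v codebook \<Rightarrow> nat \<Rightarrow> nat \<Rightarrow> 'v" where
  "row j mm c i = restrict (\<lambda>l. if l = 0 then vs i else c l (restrict mm (insert l (A l))) i) {0..j}"

definition DD :: "nat \<Rightarrow> 'v codebook \<Rightarrow> (nat \<Rightarrow> nat \<Rightarrow> 'v) \<times> (nat \<Rightarrow> nat \<Rightarrow> 'v)" where
  "DD j c = (restrict (row j m c) {..<n}, restrict (row j m' c) {..<n})"

definition levf :: "nat \<Rightarrow> (nat \<Rightarrow> nat \<Rightarrow> 'v) \<times> (nat \<Rightarrow> nat \<Rightarrow> 'v) \<Rightarrow> nat \<Rightarrow> real" where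
  "levf l d i = lam p A l (fst d i) *
      (if mr l = mr' l then (if snd d i l = fst d i l then 1 else 0) else lam p A l (snd d i))"

definition fac :: "nat \<Rightarrow> (nat \<Rightarrow> nat \<Rightarrow> 'v) \<times> (nat \<Rightarrow> nat \<Rightarrow> 'v) \<Rightarrow> real" where
  "fac j d = (\<Prod>i<n. \<Prod>l\<in>{1..j}. levf l d i)"

definition SS :: "nat \<Rightarrow> nat \<Rightarrow> (nat \<Rightarrow> 'v) set" where
  "SS j i = {w \<in> PiE {0..j} (\<lambda>_. UNIV). w 0 = vs i}"

definition Shape :: "nat \<Rightarrow> ((nat \<Rightarrow> nat \<Rightarrow> 'v) \<times> (nat \<Rightarrow> nat \<Rightarrow> 'v)) set" where
  "Shape j = PiE {..<n} (SS j) \<times> PiE {..<n} (SS j)"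

definition trunc :: "nat \<Rightarrow> (nat \<Rightarrow> nat \<Rightarrow> 'v) \<times> (nat \<Rightarrow> nat \<Rightarrow> 'v) \<Rightarrow> (nat \<Rightarrow> nat \<Rightarrow> 'v) \<times> (nat \<Rightarrow> nat \<Rightarrow> 'v)" where
  "trunc j z = (\<lambda>i\<in>{..<n}. restrict (fst z i) {0..j}, \<lambda>i\<in>{..<n}. restrict (snd z i) {0..j})"

definition ext :: "nat \<Rightarrow> (nat \<Rightarrow> nat \<Rightarrow> 'v) \<times> (nat \<Rightarrow> nat \<Rightarrow> 'v) \<Rightarrow> ((nat \<Rightarrow> nat) \<times> nat \<Rightarrow> 'v)
    \<Rightarrow> (nat \<Rightarrow> nat \<Rightarrow> 'v) \<times> (nat \<Rightarrow> nat \<Rightarrow> 'v)" where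
  "ext j d f = (\<lambda>i\<in>{..<n}. (fst d i)(Suc j := f (mr (Suc j), i)), \<lambda>i\<in>{..<n}. (snd d i)(Suc j := f (mr' (Suc j), i)))"

lemma finite_SS: "finite (SS j i)"
proof -
  have "finite (PiE {0..j} (\<lambda>_. (UNIV :: 'v set)))" by (intro finite_PiE) auto
  thus ?thesis unfolding SS_def by simp
qed

lemma finite_Shape: "finite (Shape j)"
  unfolding Shape_def by (intro finite_cartesian_product finite_PiE finite_SS) auto

lemma DD_upd:
  "DD (Suc j) (c(Suc j := (\<lambda>mm i. f (mm, i)))) = ext j (DD j c) f"
  unfolding DD_def ext_def
  by (auto simp: row_def fun_eq_iff restrict_def mr_def mr'_def)

lemma trunc_ext:
  assumes "d \<in> Shape j"
  shows "trunc j (ext j d f) = d"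
  using assms unfolding Shape_def SS_def trunc_def ext_def
  by (auto simp: fun_eq_iff restrict_def PiE_def extensional_def Pi_def)

lemma ext_Shape:
  assumes "d \<in> Shape j"
  shows "ext j d f \<in> Shape (Suc j)"
  using assms unfolding Shape_def SS_def ext_def
  by (auto simp: PiE_def extensional_def Pi_def)

lemma trunc_Shape:
  assumes "z \<in> Shape (Suc j)"
  shows "trunc j z \<in> Shape j"
  using assms unfolding Shape_def SS_def trunc_def
  by (auto simp: PiE_def extensional_def Pi_def)


lemma restrict_upd_ext:
  assumes "w \<in> extensional {0..Suc j}"
  shows "(restrict w {0..j})(Suc j := w (Suc j)) = w"
  using assms by (auto simp: fun_eq_iff extensional_def restrict_def)

lemma A_in: "j \<in> {1..k} \<Longrightarrow> A j \<subseteq> {1..<j}" using A_sub by blast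

lemma levf_trunc:
  assumes "z \<in> Shape (Suc j)" "l \<in> {1..j}" "Suc j \<le> k" "i < n"
  shows "levf l (trunc j z) i = levf l z i"
proof -
  have Al: "A l \<subseteq> {1..<l}" using A_in[of l] assms by auto
  have "lam p A l (restrict (fst z i) {0..j}) = lam p A l (fst z i)"
    using Al assms(2) by (intro lam_cong) auto
  moreover have "lam p A l (restrict (snd z i) {0..j}) = lam p A l (snd z i)"
    using Al assms(2) by (intro lam_cong) auto
  ultimately show ?thesis using assms unfolding levf_def trunc_def by auto
qed

lemma fac_Suc:
  assumes z: "z \<in> Shape (Suc j)" and jk: "Suc j \<le> k"
  shows "fac (Suc j) z = fac j (trunc j z) * (\<Prod>i<n. levf (Suc j) z i)"
proof -
  have "fac (Suc j) z = (\<Prod>i<n. levf (Suc j) z i * (\<Prod>l\<in>{1..j}. levf l z i))"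
    unfolding fac_def by (intro prod.cong refl) (simp add: atLeastAtMostSuc_conv)
  also have "\<dots> = (\<Prod>i<n. levf (Suc j) z i) * (\<Prod>i<n. \<Prod>l\<in>{1..j}. levf l z i)"
    by (simp add: prod.distrib)
  also have "(\<Prod>i<n. \<Prod>l\<in>{1..j}. levf l z i) = fac j (trunc j z)"
    unfolding fac_def using levf_trunc[OF z _ jk] by (intro prod.cong refl) auto
  finally show ?thesis by simp
qed

definition I' :: "nat \<Rightarrow> ((nat \<Rightarrow> nat) \<times> nat) set" where
  "I' j = {mr (Suc j), mr' (Suc j)} \<times> {..<n}"

definition parD :: "nat \<Rightarrow> (nat \<Rightarrow> nat \<Rightarrow> 'v) \<times> (nat \<Rightarrow> nat \<Rightarrow> 'v) \<Rightarrow> (nat \<Rightarrow> nat) \<times> nat \<Rightarrow> 'v pmf" where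
  "parD j d x = cond_V p (A (Suc j)) (Suc j)
      (if fst x = mr (Suc j) then fst d (snd x) else snd d (snd x)) (vs (snd x))"

lemma finite_I': "finite (I' j)" unfolding I'_def by auto

lemma pmf_K:
  assumes d: "d \<in> Shape j" and jk: "Suc j \<le> k"
  shows "pmf (map_pmf (ext j d) (Pi_pmf (I' j) undefined (parD j d))) z =
     (if z \<in> Shape (Suc j) \<and> d = trunc j z then (\<Prod>i<n. levf (Suc j) z i) else 0)"
proof -
  let ?M = "Pi_pmf (I' j) undefined (parD j d)"
  let ?D = "{f. \<forall>x. x \<notin> I' j \<longrightarrow> f x = undefined}"
  define J1 where "J1 = Suc j"
  have sub: "set_pmf ?M \<subseteq> ?D" by (rule set_Pi_pmf_subset[OF finite_I'])
  have eq0: "pmf (map_pmf (ext j d) ?M) z = measure ?M (ext j d -` {z} \<inter> ?D)"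
  proof -
    have "pmf (map_pmf (ext j d) ?M) z = measure ?M (ext j d -` {z})" by (simp add: pmf_map)
    also have "\<dots> = measure ?M (ext j d -` {z} \<inter> set_pmf ?M)" by (simp add: measure_Int_set_pmf)
    also have "ext j d -` {z} \<inter> set_pmf ?M = (ext j d -` {z} \<inter> ?D) \<inter> set_pmf ?M" using sub by auto
    also have "measure ?M \<dots> = measure ?M (ext j d -` {z} \<inter> ?D)" by (simp add: measure_Int_set_pmf)
    finally show ?thesis .
  qed
  show ?thesis
  proof (cases "z \<in> Shape (Suc j) \<and> d = trunc j z")
    case False
    have "ext j d f \<noteq> z" for f
      using False ext_Shape[OF d, of f] trunc_ext[OF d, of f] by metis
    hence e: "ext j d -` {z} = {}" by auto
    have "pmf (map_pmf (ext j d) ?M) z = measure ?M ({} \<inter> ?D)" using eq0 unfolding e .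
    also have "\<dots> = 0" by simp
    finally show ?thesis unfolding if_not_P[OF False] .
  next
    case True
    have z: "z \<in> Shape (Suc j)" using True by (rule conjunct1)
    have dz: "d = trunc j z" using True by (rule conjunct2)
    have zf: "fst z \<in> PiE {..<n} (SS (Suc j))" and zs: "snd z \<in> PiE {..<n} (SS (Suc j))"
      using z unfolding Shape_def by (simp_all add: mem_Times_iff)
    show ?thesis
    proof (cases "mr J1 = mr' J1 \<longrightarrow> (\<forall>i<n. snd z i J1 = fst z i J1)")
      case False
      then obtain i where ag: "mr J1 = mr' J1" and i: "i < n" "snd z i J1 \<noteq> fst z i J1" by auto
      have "ext j d -` {z} = {}"
      proof (rule ccontr)
        assume "ext j d -` {z} \<noteq> {}"
        then obtain f where "ext j d f = z" by auto
        hence "fst z i J1 = f (mr J1, i)" "snd z i J1 = f (mr' J1, i)"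
          using i by (auto simp: ext_def J1_def)
        thus False using ag i by simp
      qed
      moreover have "(\<Prod>i<n. levf (Suc j) z i) = 0"
        using i ag by (intro prod_zero bexI[of _ i]) (auto simp: levf_def J1_def)
      ultimately show ?thesis using eq0 unfolding if_P[OF True] by simp
    next
      case cons: True
      define g0 where "g0 = (\<lambda>x. if x \<in> I' j then (if fst x = mr J1 then fst z (snd x) J1 else snd z (snd x) J1) else undefined)"
      have ext_g0: "ext j d g0 = z"
      proof -
        have "fst (ext j d g0) = fst z"
        proof
          fix i show "fst (ext j d g0) i = fst z i"
          proof (cases "i < n")
            case True
            have "fst z i \<in> SS (Suc j) i" using zf True by auto
            hence ex: "fst z i \<in> extensional {0..Suc j}" by (auto simp: SS_def PiE_def)
            have g: "g0 (mr J1, i) = fst z i J1" using True by (simp add: g0_def I'_def J1_def)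
            have "fst (ext j d g0) i = (fst d i)(Suc j := g0 (mr (Suc j), i))"
              using True by (simp add: ext_def)
            also have "\<dots> = (restrict (fst z i) {0..j})(Suc j := fst z i (Suc j))"
              using g True by (simp add: dz trunc_def J1_def)
            also have "\<dots> = fst z i" by (rule restrict_upd_ext[OF ex])
            finally show ?thesis .
          next
            case False thus ?thesis using zf unfolding ext_def by (auto simp: PiE_def extensional_def)
          qed
        qed
        moreover have "snd (ext j d g0) = snd z"
        proof
          fix i show "snd (ext j d g0) i = snd z i"
          proof (cases "i < n")
            case True
            have "snd z i \<in> SS (Suc j) i" using zs True by auto
            hence ex: "snd z i \<in> extensional {0..Suc j}" by (auto simp: SS_def PiE_def)
            have g: "g0 (mr' J1, i) = snd z i J1" using True cons by (simp add: g0_def I'_def J1_def)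
            have "snd (ext j d g0) i = (snd d i)(Suc j := g0 (mr' (Suc j), i))"
              using True by (simp add: ext_def)
            also have "\<dots> = (restrict (snd z i) {0..j})(Suc j := snd z i (Suc j))"
              using g True by (simp add: dz trunc_def J1_def)
            also have "\<dots> = snd z i" by (rule restrict_upd_ext[OF ex])
            finally show ?thesis .
          next
            case False thus ?thesis using zs unfolding ext_def by (auto simp: PiE_def extensional_def)
          qed
        qed
        ultimately show ?thesis by (simp add: prod_eq_iff)
      qed
      have set_eq: "ext j d -` {z} \<inter> ?D = {g0}"
      proof (intro equalityI subsetI)
        fix f assume f: "f \<in> ext j d -` {z} \<inter> ?D"
        hence fz: "ext j d f = z" and fD: "\<forall>x. x \<notin> I' j \<longrightarrow> f x = undefined" by auto
        have "f x = g0 x" for x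
        proof (cases "x \<in> I' j")
          case True
          then obtain mm i where x: "x = (mm, i)" "mm \<in> {mr J1, mr' J1}" "i < n"
            by (auto simp: I'_def J1_def)
          show ?thesis
          proof (cases "mm = mr J1")
            case True
            have "fst (ext j d f) i J1 = f (mr J1, i)" using x by (simp add: ext_def J1_def)
            thus ?thesis using True x fz \<open>x \<in> I' j\<close> by (simp add: g0_def)
          next
            case False
            hence "mm = mr' J1" using x by auto
            have "snd (ext j d f) i J1 = f (mr' J1, i)" using x by (simp add: ext_def J1_def)
            thus ?thesis using False x fz \<open>x \<in> I' j\<close> \<open>mm = mr' J1\<close> by (simp add: g0_def)
          qed
        next
          case False thus ?thesis using fD[rule_format, of x] by (simp add: g0_def)
        qed
        thus "f \<in> {g0}" by auto
      next
        fix f assume "f \<in> {g0}"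
        thus "f \<in> ext j d -` {z} \<inter> ?D" using ext_g0 by (auto simp: g0_def)
      qed
      have "pmf (map_pmf (ext j d) ?M) z = pmf ?M g0"
        using eq0 set_eq by (simp add: measure_pmf_single)
      also have "\<dots> = (\<Prod>x\<in>I' j. pmf (parD j d x) (g0 x))"
        by (rule pmf_Pi'[OF finite_I']) (simp add: g0_def)
      also have "\<dots> = (\<Prod>i<n. levf (Suc j) z i)"
      proof -
        have lamz: "pmf (cond_V p (A J1) J1 (fst d i) (vs i)) (fst z i J1) = lam p A J1 (fst z i)"
          and lamz': "pmf (cond_V p (A J1) J1 (snd d i) (vs i)) (snd z i J1) = lam p A J1 (snd z i)"
          if i: "i < n" for i
        proof -
          have AJ: "A J1 \<subseteq> {1..<J1}" using A_in[of J1] jk by (auto simp: J1_def)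
          have s1: "fst z i \<in> SS (Suc j) i" "snd z i \<in> SS (Suc j) i" using zf zs i by auto
          hence z0: "fst z i 0 = vs i" "snd z i 0 = vs i" by (auto simp: SS_def)
          have fd: "fst d i = restrict (fst z i) {0..j}" "snd d i = restrict (snd z i) {0..j}"
            using i by (simp_all add: dz trunc_def)
          have ag1: "fst d i a = fst z i a" "snd d i a = snd z i a" if "a \<in> A J1" for a
          proof -
            have "a \<in> {0..j}" using that AJ by (auto simp: J1_def)
            thus "fst d i a = fst z i a" "snd d i a = snd z i a" by (simp_all add: fd)
          qed
          have "cond_V p (A J1) J1 (fst d i) (vs i) = cond_V p (A J1) J1 (fst z i) (fst z i 0)"
            unfolding z0 by (rule cond_V_cong) (rule ag1(1))
          thus "pmf (cond_V p (A J1) J1 (fst d i) (vs i)) (fst z i J1) = lam p A J1 (fst z i)"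
            by (simp add: lam_def)
          have "cond_V p (A J1) J1 (snd d i) (vs i) = cond_V p (A J1) J1 (snd z i) (snd z i 0)"
            unfolding z0 by (rule cond_V_cong) (rule ag1(2))
          thus "pmf (cond_V p (A J1) J1 (snd d i) (vs i)) (snd z i J1) = lam p A J1 (snd z i)"
            by (simp add: lam_def)
        qed
        show ?thesis
        proof (cases "mr J1 = mr' J1")
          case True
          have "(\<Prod>x\<in>I' j. pmf (parD j d x) (g0 x)) = (\<Prod>x\<in>{mr J1} \<times> {..<n}. pmf (parD j d x) (g0 x))"
            using True by (simp add: I'_def J1_def)
          also have "\<dots> = (\<Prod>mm\<in>{mr J1}. \<Prod>i<n. pmf (parD j d (mm, i)) (g0 (mm, i)))"
            by (simp add: prod.cartesian_product)
          also have "\<dots> = (\<Prod>i<n. pmf (parD j d (mr J1, i)) (g0 (mr J1, i)))"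
            by simp
          also have "\<dots> = (\<Prod>i<n. levf (Suc j) z i)"
          proof (intro prod.cong refl)
            fix i assume i: "i \<in> {..<n}"
            have g: "g0 (mr J1, i) = fst z i J1" using i by (simp add: g0_def I'_def J1_def)
            have pd: "parD j d (mr J1, i) = cond_V p (A J1) J1 (fst d i) (vs i)" by (simp add: parD_def J1_def)
            have "levf (Suc j) z i = lam p A J1 (fst z i)" using cons True i by (simp add: levf_def J1_def)
            thus "pmf (parD j d (mr J1, i)) (g0 (mr J1, i)) = levf (Suc j) z i"
              using lamz[of i] i g pd by simp
          qed
          finally show ?thesis .
        next
          case False
          have "(\<Prod>x\<in>I' j. pmf (parD j d x) (g0 x)) = (\<Prod>mm\<in>{mr J1, mr' J1}. \<Prod>i<n. pmf (parD j d (mm, i)) (g0 (mm, i)))"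
            by (simp add: prod.cartesian_product I'_def J1_def)
          also have "\<dots> = (\<Prod>i<n. pmf (parD j d (mr J1, i)) (g0 (mr J1, i))) * (\<Prod>i<n. pmf (parD j d (mr' J1, i)) (g0 (mr' J1, i)))"
            using False by simp
          also have "\<dots> = (\<Prod>i<n. levf (Suc j) z i)"
            unfolding prod.distrib[symmetric]
          proof (intro prod.cong refl)
            fix i assume i: "i \<in> {..<n}"
            have g: "g0 (mr J1, i) = fst z i J1" "g0 (mr' J1, i) = snd z i J1"
              using i False by (simp_all add: g0_def I'_def J1_def)
            have pd: "parD j d (mr J1, i) = cond_V p (A J1) J1 (fst d i) (vs i)"
                "parD j d (mr' J1, i) = cond_V p (A J1) J1 (snd d i) (vs i)"
              using False by (simp_all add: parD_def J1_def)
            have "levf (Suc j) z i = lam p A J1 (fst z i) * lam p A J1 (snd z i)"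
              using False by (simp add: levf_def J1_def)
            thus "pmf (parD j d (mr J1, i)) (g0 (mr J1, i)) * pmf (parD j d (mr' J1, i)) (g0 (mr' J1, i)) = levf (Suc j) z i"
              using lamz[of i] lamz'[of i] i g pd by simp
          qed
          finally show ?thesis .
        qed
      qed
      finally show ?thesis unfolding if_P[OF True] .
    qed
  qed
qed

lemma mr_idx:
  assumes "l \<in> {1..k}"
  shows "mr l \<in> idx A L l" "mr' l \<in> idx A L l"
proof -
  have sub: "insert l (A l) \<subseteq> {1..k}" using A_in[OF assms] assms by auto
  show "mr l \<in> idx A L l" using m_in sub unfolding mr_def idx_def msgs_def by (auto simp: PiE_def Pi_def)
  show "mr' l \<in> idx A L l" using m'_in sub unfolding mr'_def idx_def msgs_def by (auto simp: PiE_def Pi_def)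
qed

lemma finite_idx:
  assumes "l \<in> {1..k}"
  shows "finite (idx A L l)"
proof -
  have "finite (A l)" using A_in[OF assms] by (rule finite_subset) auto
  thus ?thesis unfolding idx_def by (intro finite_PiE) auto
qed

lemma ext_restr:
  "ext j d f = ext j d (\<lambda>x. if x \<in> I' j then f x else undefined)"
  unfolding ext_def I'_def by (auto simp: fun_eq_iff restrict_def)

lemma row_A:
  assumes "a \<in> A (Suc j)" "Suc j \<le> k" and mmdef: "mm = m \<or> mm = m'"
  shows "row j mm c i a = c a (restrict (restrict mm (insert (Suc j) (A (Suc j)))) (insert a (A a))) i"
proof -
  have AJ: "A (Suc j) \<subseteq> {1..<Suc j}" using A_in[of "Suc j"] assms by auto
  have "A a \<subseteq> A (Suc j)" using A_cl assms by auto
  hence sub: "insert a (A a) \<subseteq> insert (Suc j) (A (Suc j))" using assms by auto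
  have "restrict (restrict mm (insert (Suc j) (A (Suc j)))) (insert a (A a)) = restrict mm (insert a (A a))"
    using sub by (auto simp: fun_eq_iff restrict_def)
  moreover have "a \<in> {0..j}" "a \<noteq> 0" using AJ assms by auto
  ultimately show ?thesis by (simp add: row_def)
qed

lemma canon_step:
  assumes jk: "Suc j \<le> k"
  shows "map_pmf (DD (Suc j)) (canon_cb p A L n vs (Suc j)) =
     map_pmf (DD j) (canon_cb p A L n vs j) \<bind> (\<lambda>d. map_pmf (ext j d) (Pi_pmf (I' j) undefined (parD j d)))"
proof -
  define J1 where "J1 = Suc j"
  let ?I = "idx A L (Suc j) \<times> {..<n}"
  have finI: "finite ?I" using finite_idx[of "Suc j"] jk by auto
  have subI: "I' j \<subseteq> ?I" using mr_idx[of "Suc j"] jk by (auto simp: I'_def)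
  have step: "map_pmf (DD (Suc j)) (gen_level p A L n (Suc j) vs c)
      = map_pmf (ext j (DD j c)) (Pi_pmf (I' j) undefined (parD j (DD j c)))" for c
  proof -
    let ?par = "\<lambda>(mm, i). cond_V p (A (Suc j)) (Suc j) (\<lambda>a. c a (restrict mm (insert a (A a))) i) (vs i)"
    have "map_pmf (DD (Suc j)) (gen_level p A L n (Suc j) vs c)
        = map_pmf (ext j (DD j c)) (Pi_pmf ?I undefined ?par)"
      unfolding gen_level_def map_pmf_comp o_def DD_upd ..
    also have "\<dots> = map_pmf (ext j (DD j c)) (map_pmf (\<lambda>f x. if x \<in> I' j then f x else undefined) (Pi_pmf ?I undefined ?par))"
      unfolding map_pmf_comp o_def by (intro map_pmf_cong refl ext_restr)
    also have "\<dots> = map_pmf (ext j (DD j c)) (Pi_pmf (I' j) undefined ?par)"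
      by (subst Pi_pmf_subset[OF finI subI]) (rule refl)
    also have "Pi_pmf (I' j) undefined ?par = Pi_pmf (I' j) undefined (parD j (DD j c))"
    proof (rule Pi_pmf_cong[OF refl refl])
      fix x assume x: "x \<in> I' j"
      then obtain mm i where xe: "x = (mm, i)" and mm: "mm = mr (Suc j) \<or> mm = mr' (Suc j)" and i: "i < n"
        by (auto simp: I'_def)
      show "?par x = parD j (DD j c) x"
      proof (cases "mm = mr (Suc j)")
        case True
        have "cond_V p (A (Suc j)) (Suc j) (\<lambda>a. c a (restrict mm (insert a (A a))) i) (vs i)
            = cond_V p (A (Suc j)) (Suc j) (fst (DD j c) i) (vs i)"
          using i row_A[OF _ jk, of _ m c i] True
          by (intro cond_V_cong) (simp add: DD_def mr_def)
        thus ?thesis using True by (simp add: xe parD_def)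
      next
        case False
        hence mm': "mm = mr' (Suc j)" using mm by auto
        have "cond_V p (A (Suc j)) (Suc j) (\<lambda>a. c a (restrict mm (insert a (A a))) i) (vs i)
            = cond_V p (A (Suc j)) (Suc j) (snd (DD j c) i) (vs i)"
          using i row_A[OF _ jk, of _ m' c i] mm'
          by (intro cond_V_cong) (simp add: DD_def mr'_def)
        thus ?thesis using False by (simp add: xe parD_def)
      qed
    qed
    finally show ?thesis .
  qed
  show ?thesis
    by (simp add: map_bind_pmf bind_map_pmf step)
qed

lemma Shape0: "d \<in> Shape 0 \<longleftrightarrow> d = DD 0 c"
proof
  assume d: "d \<in> Shape 0"
  have "fst d = fst (DD 0 c)" "snd d = snd (DD 0 c)"
    using d by (auto simp: Shape_def SS_def DD_def row_def fun_eq_iff PiE_def extensional_def restrict_def Pi_def)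
  thus "d = DD 0 c" by (simp add: prod_eq_iff)
next
  assume "d = DD 0 c"
  thus "d \<in> Shape 0" by (auto simp: Shape_def SS_def DD_def row_def)
qed

lemma pmf_DD:
  assumes "j \<le> k"
  shows "pmf (map_pmf (DD j) (canon_cb p A L n vs j)) d = (if d \<in> Shape j then fac j d else 0)"
  using assms
proof (induction j arbitrary: d)
  case 0
  show ?case using Shape0[of d "\<lambda>j m i. undefined"]
    by (auto simp: fac_def indicator_def)
next
  case (Suc j)
  let ?M = "map_pmf (DD j) (canon_cb p A L n vs j)"
  let ?K = "\<lambda>d. map_pmf (ext j d) (Pi_pmf (I' j) undefined (parD j d))"
  have IH: "pmf ?M d = (if d \<in> Shape j then fac j d else 0)" for d using Suc by auto
  have supp: "set_pmf ?M \<subseteq> Shape j"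
  proof
    fix x assume "x \<in> set_pmf ?M"
    hence "pmf ?M x \<noteq> 0" by (simp add: set_pmf_eq)
    thus "x \<in> Shape j" using IH[of x] by (auto split: if_splits)
  qed
  have "pmf (map_pmf (DD (Suc j)) (canon_cb p A L n vs (Suc j))) d = pmf (?M \<bind> ?K) d"
    using canon_step[OF Suc.prems] by simp
  also have "\<dots> = (\<integral>x. pmf (?K x) d \<partial>measure_pmf ?M)" by (rule pmf_bind)
  also have "\<dots> = (\<Sum>x\<in>Shape j. pmf (?K x) d * pmf ?M x)"
    by (rule integral_measure_pmf_real[OF finite_Shape]) (use supp in auto)
  also have "\<dots> = (\<Sum>x\<in>Shape j. (if d \<in> Shape (Suc j) \<and> x = trunc j d then (\<Prod>i<n. levf (Suc j) d i) else 0) * fac j x)"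
    using IH Suc.prems by (intro sum.cong refl) (simp add: pmf_K)
  also have "\<dots> = (if d \<in> Shape (Suc j) then (\<Prod>i<n. levf (Suc j) d i) * fac j (trunc j d) else 0)"
  proof (cases "d \<in> Shape (Suc j)")
    case True
    have "(\<Sum>x\<in>Shape j. (if d \<in> Shape (Suc j) \<and> x = trunc j d then (\<Prod>i<n. levf (Suc j) d i) else 0) * fac j x)
        = (\<Sum>x\<in>Shape j. if x = trunc j d then (\<Prod>i<n. levf (Suc j) d i) * fac j x else 0)"
      using True by (intro sum.cong refl) auto
    also have "\<dots> = (\<Prod>i<n. levf (Suc j) d i) * fac j (trunc j d)"
      using trunc_Shape[OF True] finite_Shape by (simp add: sum.delta')
    finally show ?thesis using True by simp
  qed simp
  also have "\<dots> = (if d \<in> Shape (Suc j) then fac (Suc j) d else 0)"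
    using fac_Suc[of d j] Suc.prems by (auto simp: mult.commute)
  finally show ?case .
qed

end

lemma sum_prod_PiE_weight:
  fixes w h :: "'a \<Rightarrow> 'b \<Rightarrow> real"
  assumes "finite I" "\<And>i. i \<in> I \<Longrightarrow> finite (B i)"
  shows "(\<Sum>x\<in>PiE I B. (\<Prod>i\<in>I. w i (x i)) * (\<Prod>i\<in>I. h i (x i))) = (\<Prod>i\<in>I. \<Sum>s\<in>B i. w i s * h i s)"
proof -
  have "(\<Sum>x\<in>PiE I B. (\<Prod>i\<in>I. w i (x i)) * (\<Prod>i\<in>I. h i (x i))) = (\<Sum>x\<in>PiE I B. (\<Prod>i\<in>I. w i (x i) * h i (x i)))"
    by (simp add: prod.distrib)
  also have "\<dots> = (\<Prod>i\<in>I. \<Sum>s\<in>B i. w i s * h i s)"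
    by (rule prod_sum_PiE[OF assms, symmetric])
  finally show ?thesis .
qed

lemma var_prod:
  fixes w z :: "'a \<Rightarrow> 'b \<Rightarrow> real"
  assumes fin: "finite I" and finB: "\<And>i. i \<in> I \<Longrightarrow> finite (B i)"
    and w1: "\<And>i. i \<in> I \<Longrightarrow> (\<Sum>s\<in>B i. w i s) = 1"
    and w0: "\<And>i s. i \<in> I \<Longrightarrow> s \<in> B i \<Longrightarrow> w i s \<ge> 0"
    and z01: "\<And>i s. i \<in> I \<Longrightarrow> s \<in> B i \<Longrightarrow> 0 \<le> z i s \<and> z i s \<le> 1"
  defines "\<mu> \<equiv> \<lambda>i. \<Sum>s\<in>B i. w i s * z i s"
  shows "(\<Sum>x\<in>PiE I B. (\<Prod>i\<in>I. w i (x i)) * ((\<Sum>i\<in>I. z i (x i)) - (\<Sum>i\<in>I. \<mu> i))^2) \<le> real (card I)"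
proof -
  define c where "c = (\<lambda>i s. z i s - \<mu> i)"
  have mu01: "0 \<le> \<mu> i \<and> \<mu> i \<le> 1" if "i \<in> I" for i
  proof -
    have "\<mu> i \<le> (\<Sum>s\<in>B i. w i s)" unfolding \<mu>_def
      using that w0 z01 by (intro sum_mono) (simp add: mult_left_le)
    moreover have "\<mu> i \<ge> 0" unfolding \<mu>_def using that w0 z01 by (intro sum_nonneg) auto
    ultimately show ?thesis using w1[OF that] by simp
  qed
  have cb: "\<bar>c i s\<bar> \<le> 1" if "i \<in> I" "s \<in> B i" for i s
    using z01[OF that] mu01[OF that(1)] unfolding c_def by auto
  have sq: "((\<Sum>i\<in>I. z i (x i)) - (\<Sum>i\<in>I. \<mu> i))^2 = (\<Sum>i\<in>I. \<Sum>j\<in>I. c i (x i) * c j (x j))" for x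
    by (simp add: c_def sum_subtractf[symmetric] power2_eq_square sum_product)
  have key: "(\<Sum>x\<in>PiE I B. (\<Prod>t\<in>I. w t (x t)) * (c i (x i) * c j (x j)))
      = (\<Prod>t\<in>I. \<Sum>s\<in>B t. w t s * ((if t = i then c i s else 1) * (if t = j then c j s else 1)))"
    if ij: "i \<in> I" "j \<in> I" for i j
  proof -
    have "c i (x i) * c j (x j) = (\<Prod>t\<in>I. (if t = i then c i (x t) else 1) * (if t = j then c j (x t) else 1))" for x
      using ij fin by (simp add: prod.distrib)
    hence "(\<Sum>x\<in>PiE I B. (\<Prod>t\<in>I. w t (x t)) * (c i (x i) * c j (x j)))
        = (\<Sum>x\<in>PiE I B. (\<Prod>t\<in>I. w t (x t)) * (\<Prod>t\<in>I. (\<lambda>t s. (if t = i then c i s else 1) * (if t = j then c j s else 1)) t (x t)))"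
      by simp
    also have "\<dots> = (\<Prod>t\<in>I. \<Sum>s\<in>B t. w t s * ((if t = i then c i s else 1) * (if t = j then c j s else 1)))"
      by (rule sum_prod_PiE_weight[OF fin finB])
    finally show ?thesis .
  qed
  have off: "(\<Sum>x\<in>PiE I B. (\<Prod>t\<in>I. w t (x t)) * (c i (x i) * c j (x j))) = 0"
    if ij: "i \<in> I" "j \<in> I" "i \<noteq> j" for i j
  proof -
    have "(\<Sum>s\<in>B i. w i s * ((if i = i then c i s else 1) * (if i = j then c j s else 1))) = 0"
    proof -
      have "(\<Sum>s\<in>B i. w i s * ((if i = i then c i s else 1) * (if i = j then c j s else 1)))
          = (\<Sum>s\<in>B i. w i s * z i s) - (\<Sum>s\<in>B i. w i s) * \<mu> i"
        using ij by (simp add: c_def algebra_simps sum_subtractf sum_distrib_right sum_distrib_left)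
      also have "\<dots> = 0" using w1[OF ij(1)] by (simp add: \<mu>_def)
      finally show ?thesis .
    qed
    hence "(\<Prod>t\<in>I. \<Sum>s\<in>B t. w t s * ((if t = i then c i s else 1) * (if t = j then c j s else 1))) = 0"
      using ij fin by (intro prod_zero bexI[of _ i]) auto
    thus ?thesis using key[OF ij(1,2)] by simp
  qed
  have diag: "(\<Sum>x\<in>PiE I B. (\<Prod>t\<in>I. w t (x t)) * (c i (x i) * c i (x i))) \<le> 1"
    if i: "i \<in> I" for i
  proof -
    have "(\<Prod>t\<in>I. \<Sum>s\<in>B t. w t s * ((if t = i then c i s else 1) * (if t = i then c i s else 1)))
        = (\<Prod>t\<in>I. if t = i then (\<Sum>s\<in>B i. w i s * (c i s * c i s)) else 1)"
      using w1 by (intro prod.cong refl) auto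
    also have "\<dots> = (\<Sum>s\<in>B i. w i s * (c i s * c i s))" using i fin by (simp add: prod.delta)
    also have "\<dots> \<le> (\<Sum>s\<in>B i. w i s * 1)"
    proof (intro sum_mono mult_left_mono)
      fix s assume s: "s \<in> B i"
      have "\<bar>c i s\<bar> * \<bar>c i s\<bar> \<le> 1 * 1" using cb[OF i s] by (intro mult_mono) auto
      thus "c i s * c i s \<le> 1" by (simp add: abs_mult[symmetric])
      show "0 \<le> w i s" using w0 i s by auto
    qed
    also have "\<dots> = 1" using w1[OF i] by simp
    finally show ?thesis using key[OF i i] by simp
  qed
  have "(\<Sum>x\<in>PiE I B. (\<Prod>i\<in>I. w i (x i)) * ((\<Sum>i\<in>I. z i (x i)) - (\<Sum>i\<in>I. \<mu> i))^2)
      = (\<Sum>i\<in>I. \<Sum>j\<in>I. \<Sum>x\<in>PiE I B. (\<Prod>t\<in>I. w t (x t)) * (c i (x i) * c j (x j)))"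
    unfolding sq by (simp add: sum_distrib_left sum.swap[of _ "PiE I B"])
  also have "\<dots> = (\<Sum>i\<in>I. \<Sum>x\<in>PiE I B. (\<Prod>t\<in>I. w t (x t)) * (c i (x i) * c i (x i)))"
  proof (intro sum.cong refl)
    fix i assume i: "i \<in> I"
    have "(\<Sum>j\<in>I. \<Sum>x\<in>PiE I B. (\<Prod>t\<in>I. w t (x t)) * (c i (x i) * c j (x j)))
        = (\<Sum>j\<in>I. if j = i then (\<Sum>x\<in>PiE I B. (\<Prod>t\<in>I. w t (x t)) * (c i (x i) * c i (x i))) else 0)"
      using off i by (intro sum.cong refl) auto
    also have "\<dots> = (\<Sum>x\<in>PiE I B. (\<Prod>t\<in>I. w t (x t)) * (c i (x i) * c i (x i)))"
      using i fin by (simp add: sum.delta')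
    finally show "(\<Sum>j\<in>I. \<Sum>x\<in>PiE I B. (\<Prod>t\<in>I. w t (x t)) * (c i (x i) * c j (x j)))
        = (\<Sum>x\<in>PiE I B. (\<Prod>t\<in>I. w t (x t)) * (c i (x i) * c i (x i)))" .
  qed
  also have "\<dots> \<le> (\<Sum>i\<in>I. 1)" by (intro sum_mono diag)
  finally show ?thesis by simp
qed


definition SSv :: "(nat \<Rightarrow> 'v) \<Rightarrow> nat \<Rightarrow> nat \<Rightarrow> (nat \<Rightarrow> 'v) set" where
  "SSv vs j i = {w \<in> PiE {0..j} (\<lambda>_. UNIV). w 0 = vs i}"

lemma finite_SSv: "finite (SSv (vs :: nat \<Rightarrow> 'v::finite) j i)"
proof -
  have "finite (PiE {0..j} (\<lambda>_. (UNIV :: 'v set)))" by (intro finite_PiE) auto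
  thus ?thesis unfolding SSv_def by simp
qed

lemma SF_ext:
  assumes "a \<in> set_pmf (marg_UV p {0..k})"
  shows "snd a \<in> PiE {0..k} (\<lambda>_. UNIV)"
  using assms by (auto simp: set_marg_UV)

lemma pmf_marg0:
  "pmf (marg_UV p {0}) (u, restrict (\<lambda>_. v0) {0}) = pmf (map_pmf (\<lambda>(u, v). (u, v 0)) p) (u, v0)"
proof -
  have "(\<lambda>(u, v). (u, restrict v {0})) -` {(u, restrict (\<lambda>_. v0) {0})} = (\<lambda>(u, v). (u, v 0)) -` {(u, v0)}"
    apply (auto simp: fun_eq_iff restrict_def)
    subgoal for b by (drule spec[of _ 0]) simp
    done
  thus ?thesis unfolding marg_UV_def pmf_map by (rule arg_cong)
qed

lemma prJ_empty: "prJ {} a = (fst a, restrict (\<lambda>_. snd a 0) {0})"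
  by (auto simp: prJ_def fun_eq_iff restrict_def)

lemma rho_empty:
  "rho p k {} a = pmf (marg_UV p {0..k}) a / pmf (map_pmf (\<lambda>(u, v). (u, v 0)) p) (fst a, snd a 0)"
  unfolding rho_def prJ_empty pmf_marg0 ..

locale ctyp =
  fixes p :: "('u::finite \<times> (nat \<Rightarrow> 'v::finite)) pmf" and k :: nat
    and us :: "nat \<Rightarrow> 'u" and vs :: "nat \<Rightarrow> 'v" and n :: nat and eps eps' :: real
  assumes typ0: "(\<lambda>i. (us i, vs i)) \<in> typical (map_pmf (\<lambda>(u, v). (u, v 0)) p) eps' n"
    and eps: "0 < eps'" "eps' < eps"
    and npos: "n > 0"
begin

abbreviation "pF \<equiv> marg_UV p {0..k}"
abbreviation "p0 \<equiv> map_pmf (\<lambda>(u, v). (u, v 0)) p"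
abbreviation "SF \<equiv> set_pmf pF"

definition w :: "nat \<Rightarrow> (nat \<Rightarrow> 'v) \<Rightarrow> real" where "w i s = rho p k {} (us i, s)"

lemma finSF: "finite SF" by (rule finite_set_marg_UV) auto

lemma rho_nonneg: "rho p k J a \<ge> 0" unfolding rho_def by simp

lemma w_nonneg: "w i s \<ge> 0" unfolding w_def by (rule rho_nonneg)

lemma sum_pF_slice:
  "(\<Sum>s\<in>SSv vs k i. pmf pF (u, s)) = pmf p0 (u, vs i)"
proof -
  have inj: "inj_on (\<lambda>s. (u, s)) (SSv vs k i)" by (auto simp: inj_on_def)
  have "(\<Sum>s\<in>SSv vs k i. pmf pF (u, s)) = (\<Sum>a\<in>(\<lambda>s. (u, s)) ` SSv vs k i. pmf pF a)"
    by (simp add: sum.reindex[OF inj])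
  also have "\<dots> = measure pF ((\<lambda>s. (u, s)) ` SSv vs k i)"
    by (rule measure_measure_pmf_finite[symmetric]) (simp add: finite_SSv)
  also have "\<dots> = measure pF ((\<lambda>s. (u, s)) ` SSv vs k i \<inter> SF)" by (simp add: measure_Int_set_pmf)
  also have "(\<lambda>s. (u, s)) ` SSv vs k i \<inter> SF = prJ {} -` {(u, restrict (\<lambda>_. vs i) {0})} \<inter> SF"
  proof (intro equalityI subsetI)
    fix a assume "a \<in> (\<lambda>s. (u, s)) ` SSv vs k i \<inter> SF"
    thus "a \<in> prJ {} -` {(u, restrict (\<lambda>_. vs i) {0})} \<inter> SF"
      by (auto simp: SSv_def prJ_empty)
  next
    fix a assume a: "a \<in> prJ {} -` {(u, restrict (\<lambda>_. vs i) {0})} \<inter> SF"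
    hence "fst a = u" "snd a 0 = vs i" by (auto simp: prJ_empty fun_eq_iff restrict_def split: if_splits)
    moreover have "snd a \<in> PiE {0..k} (\<lambda>_. UNIV)" using a SF_ext[of a p k] by auto
    ultimately show "a \<in> (\<lambda>s. (u, s)) ` SSv vs k i \<inter> SF"
      using a by (auto simp: SSv_def image_iff intro!: exI[of _ "snd a"] prod_eqI)
  qed
  also have "measure pF \<dots> = measure pF (prJ {} -` {(u, restrict (\<lambda>_. vs i) {0})})"
    by (simp add: measure_Int_set_pmf)
  also have "\<dots> = pmf (map_pmf (prJ {}) pF) (u, restrict (\<lambda>_. vs i) {0})" by (simp add: pmf_map)
  also have "\<dots> = pmf (marg_UV p {0}) (u, restrict (\<lambda>_. vs i) {0})"
    using pJ_map[of "{}" k p] by simp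
  also have "\<dots> = pmf p0 (u, vs i)" by (rule pmf_marg0)
  finally show ?thesis .
qed

lemma p0_pos: "i < n \<Longrightarrow> pmf p0 (us i, vs i) > 0"
  using typical_in_support[OF typ0] by (simp add: pmf_positive)

lemma sum_w: "i < n \<Longrightarrow> (\<Sum>s\<in>SSv vs k i. w i s) = 1"
proof -
  assume i: "i < n"
  have "(\<Sum>s\<in>SSv vs k i. w i s) = (\<Sum>s\<in>SSv vs k i. pmf pF (us i, s) / pmf p0 (us i, vs i))"
    unfolding w_def rho_empty by (intro sum.cong refl) (auto simp: SSv_def)
  also have "\<dots> = 1" using p0_pos[OF i] by (simp add: sum_divide_distrib[symmetric] sum_pF_slice)
  finally show ?thesis .
qed

definition PS :: "(nat \<Rightarrow> nat \<Rightarrow> 'v) set" where "PS = PiE {..<n} (SSv vs k)"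
definition W :: "(nat \<Rightarrow> nat \<Rightarrow> 'v) \<Rightarrow> real" where "W x = (\<Prod>i<n. w i (x i))"
definition typc :: "(nat \<Rightarrow> nat \<Rightarrow> 'v) \<Rightarrow> bool" where
  "typc x \<longleftrightarrow> (\<lambda>i. (us i, x i)) \<in> typical pF eps n"
definition Z :: "'u \<times> (nat \<Rightarrow> 'v) \<Rightarrow> (nat \<Rightarrow> nat \<Rightarrow> 'v) \<Rightarrow> real" where
  "Z a x = real (card {i. i < n \<and> (us i, x i) = a})"
definition zz :: "'u \<times> (nat \<Rightarrow> 'v) \<Rightarrow> nat \<Rightarrow> (nat \<Rightarrow> 'v) \<Rightarrow> real" where
  "zz a i s = (if (us i, s) = a then 1 else 0)"
definition mu :: "'u \<times> (nat \<Rightarrow> 'v) \<Rightarrow> real" where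
  "mu a = (\<Sum>i<n. \<Sum>s\<in>SSv vs k i. w i s * zz a i s)"

lemma finite_PS: "finite PS" unfolding PS_def by (intro finite_PiE finite_SSv) auto

lemma Z_sum: "Z a x = (\<Sum>i<n. zz a i (x i))"
proof -
  have "(\<Sum>i<n. zz a i (x i)) = (\<Sum>i\<in>{i\<in>{..<n}. (us i, x i) = a}. 1)"
    unfolding zz_def by (simp add: sum.inter_filter[symmetric])
  also have "{i\<in>{..<n}. (us i, x i) = a} = {i. i < n \<and> (us i, x i) = a}" by auto
  finally show ?thesis by (simp add: Z_def)
qed

lemma sum_W: "(\<Sum>x\<in>PS. W x) = 1"
proof -
  have "(\<Sum>x\<in>PS. W x) = (\<Prod>i<n. \<Sum>s\<in>SSv vs k i. w i s)"
    unfolding PS_def W_def by (rule prod_sum_PiE[symmetric]) (auto simp: finite_SSv)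
  also have "\<dots> = 1" by (simp add: sum_w)
  finally show ?thesis .
qed

lemma W_nonneg: "W x \<ge> 0" unfolding W_def by (intro prod_nonneg) (simp add: w_nonneg)

lemma SF_p0:
  assumes "a \<in> SF"
  shows "pmf p0 (fst a, snd a 0) > 0"
proof -
  obtain x where x: "x \<in> set_pmf p" "a = (fst x, restrict (snd x) {0..k})"
    using assms by (auto simp: set_marg_UV)
  hence "(fst a, snd a 0) \<in> set_pmf p0" by (auto simp: image_iff case_prod_unfold intro!: bexI[of _ x])
  thus ?thesis by (simp add: pmf_positive)
qed

lemma mu_eq:
  assumes a: "a \<in> SF"
  shows "mu a = real (card {i. i < n \<and> (us i, vs i) = (fst a, snd a 0)}) * rho p k {} a"
proof -
  have inner: "(\<Sum>s\<in>SSv vs k i. w i s * zz a i s) = (if (us i, vs i) = (fst a, snd a 0) then rho p k {} a else 0)" for i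
  proof -
    have "(\<Sum>s\<in>SSv vs k i. w i s * zz a i s) = (\<Sum>s\<in>SSv vs k i. if s = snd a then (if us i = fst a then w i s else 0) else 0)"
      by (intro sum.cong refl) (auto simp: zz_def)
    also have "\<dots> = (if snd a \<in> SSv vs k i then (if us i = fst a then w i (snd a) else 0) else 0)"
      using finite_SSv[of vs k i] by (simp add: sum.delta sum.delta' if_distrib[symmetric])
    also have "\<dots> = (if (us i, vs i) = (fst a, snd a 0) then rho p k {} a else 0)"
      using SF_ext[OF a] by (auto simp: SSv_def w_def)
    finally show ?thesis .
  qed
  have "mu a = (\<Sum>i<n. if (us i, vs i) = (fst a, snd a 0) then rho p k {} a else 0)"
    unfolding mu_def inner ..
  also have "\<dots> = (\<Sum>i\<in>{i\<in>{..<n}. (us i, vs i) = (fst a, snd a 0)}. rho p k {} a)"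
    by (simp add: sum.inter_filter[symmetric])
  also have "{i\<in>{..<n}. (us i, vs i) = (fst a, snd a 0)} = {i. i < n \<and> (us i, vs i) = (fst a, snd a 0)}" by auto
  finally show ?thesis by simp
qed

lemma mu_close:
  assumes a: "a \<in> SF"
  shows "\<bar>mu a - real n * pmf pF a\<bar> \<le> real n * eps' * pmf pF a"
proof -
  define c where "c = real (card {i. i < n \<and> (us i, vs i) = (fst a, snd a 0)})"
  define q where "q = pmf p0 (fst a, snd a 0)"
  have q: "q > 0" using SF_p0[OF a] by (simp add: q_def)
  have t: "\<bar>c / real n - q\<bar> \<le> eps' * q" using typ0 unfolding typical_def c_def q_def by auto
  have "\<bar>c - real n * q\<bar> = real n * \<bar>c / real n - q\<bar>"
    using npos by (simp add: field_simps abs_mult[symmetric])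
  also have "\<dots> \<le> real n * (eps' * q)" using t by (intro mult_left_mono) auto
  finally have cq: "\<bar>c - real n * q\<bar> \<le> real n * (eps' * q)" .
  have "mu a = c * pmf pF a / q" using mu_eq[OF a] by (simp add: c_def q_def rho_empty)
  hence "mu a - real n * pmf pF a = (c - real n * q) * (pmf pF a / q)" using q by (simp add: field_simps)
  hence "\<bar>mu a - real n * pmf pF a\<bar> = \<bar>c - real n * q\<bar> * (pmf pF a / q)" using q by (simp add: abs_mult)
  also have "\<dots> \<le> real n * (eps' * q) * (pmf pF a / q)" using cq q by (intro mult_right_mono) auto
  also have "\<dots> = real n * eps' * pmf pF a" using q by simp
  finally show ?thesis .
qed

lemma var_Z: "(\<Sum>x\<in>PS. W x * (Z a x - mu a)^2) \<le> real n"
proof -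
  have "(\<Sum>x\<in>PS. W x * (Z a x - mu a)^2) = (\<Sum>x\<in>PiE {..<n} (SSv vs k). (\<Prod>i\<in>{..<n}. w i (x i)) *
          ((\<Sum>i\<in>{..<n}. zz a i (x i)) - (\<Sum>i\<in>{..<n}. \<Sum>s\<in>SSv vs k i. w i s * zz a i s))^2)"
    by (simp add: PS_def W_def Z_sum mu_def)
  also have "\<dots> \<le> real (card {..<n})"
    by (rule var_prod) (auto simp: finite_SSv sum_w w_nonneg zz_def)
  finally show ?thesis by simp
qed

definition bad :: "'u \<times> (nat \<Rightarrow> 'v) \<Rightarrow> (nat \<Rightarrow> nat \<Rightarrow> 'v) \<Rightarrow> bool" where
  "bad a x \<longleftrightarrow> \<bar>Z a x - real n * pmf pF a\<bar> > real n * eps * pmf pF a"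

lemma cheb:
  assumes a: "a \<in> SF"
  shows "(\<Sum>x\<in>{x\<in>PS. bad a x}. W x) \<le> 1 / (real n * (eps - eps')^2 * (pmf pF a)^2)"
proof -
  define t where "t = real n * (eps - eps') * pmf pF a"
  have pa: "pmf pF a > 0" using a by (simp add: pmf_positive)
  have t: "t > 0" using npos eps pa by (simp add: t_def)
  have b1: "1 \<le> (Z a x - mu a)^2 / t^2" if "bad a x" for x
  proof -
    have "\<bar>Z a x - real n * pmf pF a\<bar> > real n * eps * pmf pF a" using that by (simp add: bad_def)
    hence "\<bar>Z a x - mu a\<bar> \<ge> t" using mu_close[OF a] by (simp add: t_def algebra_simps)
    hence "t^2 \<le> (Z a x - mu a)^2" using t by (metis abs_ge_zero abs_of_pos power2_abs power_mono)
    thus ?thesis using t by simp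
  qed
  have "(\<Sum>x\<in>{x\<in>PS. bad a x}. W x) \<le> (\<Sum>x\<in>{x\<in>PS. bad a x}. W x * ((Z a x - mu a)^2 / t^2))"
  proof (intro sum_mono)
    fix x assume "x \<in> {x\<in>PS. bad a x}"
    hence "1 \<le> (Z a x - mu a)^2 / t^2" using b1 by auto
    thus "W x \<le> W x * ((Z a x - mu a)^2 / t^2)" using W_nonneg[of x] mult_left_mono[of 1 "(Z a x - mu a)^2 / t^2" "W x"] by simp
  qed
  also have "\<dots> \<le> (\<Sum>x\<in>PS. W x * ((Z a x - mu a)^2 / t^2))"
    using finite_PS W_nonneg by (intro sum_mono2) auto
  also have "\<dots> = (\<Sum>x\<in>PS. W x * (Z a x - mu a)^2) / t^2"
    by (simp add: sum_divide_distrib)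
  also have "\<dots> \<le> real n / t^2" using var_Z t by (intro divide_right_mono) auto
  also have "\<dots> = 1 / (real n * (eps - eps')^2 * (pmf pF a)^2)"
  proof -
    have "t^2 = real n * (real n * (eps - eps')^2 * (pmf pF a)^2)" by (simp add: t_def power_mult_distrib power2_eq_square)
    moreover have "real n / (real n * X) = 1 / X" for X using npos by simp
    ultimately show ?thesis by simp
  qed
  finally show ?thesis .
qed

lemma W_pos_SF:
  assumes "x \<in> PS" "W x \<noteq> 0" "i < n"
  shows "(us i, x i) \<in> SF"
proof -
  have "w i (x i) \<noteq> 0" using assms unfolding W_def by auto
  hence "pmf pF (us i, x i) \<noteq> 0" unfolding w_def rho_def by auto
  thus ?thesis by (simp add: set_pmf_iff)
qed

lemma typ_of_notbad:
  assumes "\<forall>i<n. (us i, x i) \<in> SF" "\<forall>a\<in>SF. \<not> bad a x"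
  shows "typc x"
  unfolding typc_def typical_def
proof (intro CollectI allI)
  fix a
  show "\<bar>real (card {i. i < n \<and> (us i, x i) = a}) / real n - pmf pF a\<bar> \<le> eps * pmf pF a"
  proof (cases "a \<in> SF")
    case True
    hence "\<bar>Z a x - real n * pmf pF a\<bar> \<le> real n * eps * pmf pF a" using assms(2) by (auto simp: bad_def)
    hence zz: "\<bar>Z a x - real n * pmf pF a\<bar> / real n \<le> eps * pmf pF a" using npos
      by (simp add: divide_le_eq algebra_simps)
    have "Z a x / real n - pmf pF a = (Z a x - real n * pmf pF a) / real n" using npos
      by (simp add: field_simps)
    hence "\<bar>Z a x / real n - pmf pF a\<bar> = \<bar>Z a x - real n * pmf pF a\<bar> / real n"
      by (simp add: abs_divide)
    thus ?thesis using zz by (simp add: Z_def)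
  next
    case False
    hence "{i. i < n \<and> (us i, x i) = a} = {}" using assms(1) by auto
    moreover have "pmf pF a = 0" using False by (simp add: set_pmf_iff)
    ultimately show ?thesis by (simp del: Collect_empty_eq)
  qed
qed

lemma typ_lb:
  "(\<Sum>x\<in>{x\<in>PS. typc x}. W x) \<ge> 1 - (\<Sum>a\<in>SF. 1 / (real n * (eps - eps')^2 * (pmf pF a)^2))"
proof -
  have ntyp: "(\<Sum>x\<in>{x\<in>PS. \<not> typc x}. W x) \<le> (\<Sum>a\<in>SF. \<Sum>x\<in>{x\<in>PS. bad a x}. W x)"
  proof -
    have "(\<Sum>x\<in>{x\<in>PS. \<not> typc x}. W x) \<le> (\<Sum>x\<in>{x\<in>PS. \<not> typc x}. \<Sum>a\<in>SF. if bad a x then W x else 0)"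
    proof (intro sum_mono)
      fix x assume x: "x \<in> {x\<in>PS. \<not> typc x}"
      show "W x \<le> (\<Sum>a\<in>SF. if bad a x then W x else 0)"
      proof (cases "W x = 0")
        case True thus ?thesis using W_nonneg by (simp add: sum_nonneg)
      next
        case False
        hence "\<forall>i<n. (us i, x i) \<in> SF" using W_pos_SF x by auto
        then obtain a where a: "a \<in> SF" "bad a x" using typ_of_notbad x by blast
        have "W x = (if bad a x then W x else 0)" using a by simp
        also have "\<dots> \<le> (\<Sum>a\<in>SF. if bad a x then W x else 0)"
          using a finSF W_nonneg by (intro member_le_sum) auto
        finally show ?thesis .
      qed
    qed
    also have "\<dots> = (\<Sum>a\<in>SF. \<Sum>x\<in>{x\<in>PS. \<not> typc x}. if bad a x then W x else 0)"
      by (rule sum.swap)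
    also have "\<dots> \<le> (\<Sum>a\<in>SF. \<Sum>x\<in>PS. if bad a x then W x else 0)"
      using finite_PS W_nonneg by (intro sum_mono sum_mono2) auto
    also have "\<dots> = (\<Sum>a\<in>SF. \<Sum>x\<in>{x\<in>PS. bad a x}. W x)"
      using finite_PS by (simp add: sum.inter_filter)
    finally show ?thesis .
  qed
  have "(\<Sum>x\<in>{x\<in>PS. typc x}. W x) + (\<Sum>x\<in>{x\<in>PS. \<not> typc x}. W x)
      = (\<Sum>x\<in>PS. (if typc x then W x else 0) + (if \<not> typc x then W x else 0))"
    by (simp add: sum.inter_filter[OF finite_PS] sum.distrib)
  also have "\<dots> = (\<Sum>x\<in>PS. W x)" by (intro sum.cong) auto
  finally have split: "(\<Sum>x\<in>PS. W x) = (\<Sum>x\<in>{x\<in>PS. typc x}. W x) + (\<Sum>x\<in>{x\<in>PS. \<not> typc x}. W x)" by simp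
  have "(\<Sum>a\<in>SF. \<Sum>x\<in>{x\<in>PS. bad a x}. W x) \<le> (\<Sum>a\<in>SF. 1 / (real n * (eps - eps')^2 * (pmf pF a)^2))"
    by (intro sum_mono cheb)
  thus ?thesis using split sum_W ntyp by linarith
qed

end

lemma typical_cong:
  assumes "\<And>i. i < n \<Longrightarrow> s i = s' i"
  shows "s \<in> typical M e n \<longleftrightarrow> s' \<in> typical M e n"
proof -
  have "{i. i < n \<and> s i = a} = {i. i < n \<and> s' i = a}" for a using assms by auto
  thus ?thesis by (simp add: typical_def)
qed

locale Eloc = ctyp p k us vs n eps eps'
  for p :: "('u::finite \<times> (nat \<Rightarrow> 'v::finite)) pmf" and k us vs n eps eps' +
  fixes A :: "nat \<Rightarrow> nat set" and L :: "nat \<Rightarrow> nat"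
  assumes A_sub: "\<forall>j\<in>{1..k}. A j \<subseteq> {1..<j}"
    and A_cl: "\<forall>j\<in>{1..k}. \<forall>i\<in>A j. A i \<subseteq> A j"
begin

definition q :: "(nat \<Rightarrow> nat \<Rightarrow> 'v) \<Rightarrow> real" where
  "q x = (\<Prod>i<n. \<Prod>l\<in>{1..k}. lam p A l (x i))"
definition qc :: "nat set \<Rightarrow> (nat \<Rightarrow> nat \<Rightarrow> 'v) \<Rightarrow> real" where
  "qc J y = (\<Prod>i<n. \<Prod>l\<in>{1..k}-J. lam p A l (y i))"
definition agreeJ :: "nat set \<Rightarrow> (nat \<Rightarrow> nat \<Rightarrow> 'v) \<Rightarrow> (nat \<Rightarrow> nat \<Rightarrow> 'v) \<Rightarrow> bool" where
  "agreeJ J x y \<longleftrightarrow> (\<forall>i<n. \<forall>l\<in>J. y i l = x i l)"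
definition Agr :: "(nat \<Rightarrow> nat) \<Rightarrow> (nat \<Rightarrow> nat) \<Rightarrow> nat set" where
  "Agr m m' = {l\<in>{1..k}. restrict m (insert l (A l)) = restrict m' (insert l (A l))}"
definition Xm :: "(nat \<Rightarrow> nat) \<Rightarrow> 'v codebook \<Rightarrow> bool" where
  "Xm m c \<longleftrightarrow> joint_seq A k us vs c m \<in> typical pF eps n"

lemma pair_prob:
  assumes mm: "m \<in> msgs L k" "m' \<in> msgs L k"
  shows "measure (canon_cb p A L n vs k) {c. Xm m c \<and> Xm m' c}
     = (\<Sum>x\<in>{x\<in>PS. typc x}. \<Sum>y\<in>{y\<in>PS. typc y}. q x * (if agreeJ (Agr m m') x y then qc (Agr m m') y else 0))"
proof -
  interpret cb: cbpair p A k L n vs m m'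
    using A_sub A_cl mm by unfold_locales auto
  let ?M = "canon_cb p A L n vs k"
  let ?J = "Agr m m'"
  have SSeq: "cb.SS j i = SSv vs j i" for j i by (simp add: cb.SS_def SSv_def)
  have ShapeEq: "cb.Shape k = PS \<times> PS" by (simp add: cb.Shape_def PS_def SSeq[abs_def])
  have X1: "Xm m c \<longleftrightarrow> typc (fst (cb.DD k c))" for c
    unfolding Xm_def typc_def
    by (rule typical_cong) (simp add: joint_seq_def cb.DD_def cb.row_def)
  have X2: "Xm m' c \<longleftrightarrow> typc (snd (cb.DD k c))" for c
    unfolding Xm_def typc_def
    by (rule typical_cong) (simp add: joint_seq_def cb.DD_def cb.row_def)
  have supp: "set_pmf (map_pmf (cb.DD k) ?M) \<subseteq> cb.Shape k"
  proof
    fix d assume "d \<in> set_pmf (map_pmf (cb.DD k) ?M)"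
    hence "pmf (map_pmf (cb.DD k) ?M) d \<noteq> 0" by (simp add: set_pmf_eq)
    thus "d \<in> cb.Shape k" using cb.pmf_DD[of k d] by (auto split: if_splits)
  qed
  have fac_eq: "cb.fac k (x, y) = q x * (if agreeJ ?J x y then qc ?J y else 0)" for x y
  proof -
    have Jsub: "?J \<subseteq> {1..k}" by (auto simp: Agr_def)
    have agr_iff: "(cb.mr l = cb.mr' l) \<longleftrightarrow> l \<in> ?J" if "l \<in> {1..k}" for l
      using that by (simp add: Agr_def cb.mr_def cb.mr'_def)
    have "cb.levf l (x, y) i = lam p A l (x i) * (if l \<in> ?J then (if y i l = x i l then 1 else 0) else lam p A l (y i))"
      if "l \<in> {1..k}" for l i
      using agr_iff[OF that] by (simp add: cb.levf_def)
    hence "cb.fac k (x, y) = (\<Prod>i<n. \<Prod>l\<in>{1..k}. lam p A l (x i) * (if l \<in> ?J then (if y i l = x i l then 1 else 0) else lam p A l (y i)))"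
      unfolding cb.fac_def by (intro prod.cong refl) auto
    also have "\<dots> = (\<Prod>i<n. (\<Prod>l\<in>{1..k}. lam p A l (x i)) * ((\<Prod>l\<in>?J. (if y i l = x i l then 1 else 0)) * (\<Prod>l\<in>{1..k}-?J. lam p A l (y i))))"
    proof (intro prod.cong refl)
      fix i
      have "(\<Prod>l\<in>{1..k}. (if l \<in> ?J then (if y i l = x i l then 1 else 0) else lam p A l (y i)))
          = (\<Prod>l\<in>?J. (if y i l = x i l then 1 else 0)) * (\<Prod>l\<in>{1..k}-?J. lam p A l (y i))"
      proof -
        let ?F = "\<lambda>l. (if l \<in> ?J then (if y i l = x i l then 1 else 0) else lam p A l (y i))"
        have "(\<Prod>l\<in>{1..k}. ?F l) = (\<Prod>l\<in>{1..k}-?J. ?F l) * (\<Prod>l\<in>?J. ?F l)"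
          using Jsub by (intro prod.subset_diff) auto
        also have "(\<Prod>l\<in>{1..k}-?J. ?F l) = (\<Prod>l\<in>{1..k}-?J. lam p A l (y i))" by (intro prod.cong) auto
        also have "(\<Prod>l\<in>?J. ?F l) = (\<Prod>l\<in>?J. (if y i l = x i l then 1 else 0))" by (intro prod.cong) auto
        finally show ?thesis by (simp add: mult.commute)
      qed
      thus "(\<Prod>l\<in>{1..k}. lam p A l (x i) * (if l \<in> ?J then (if y i l = x i l then 1 else 0) else lam p A l (y i)))
          = (\<Prod>l\<in>{1..k}. lam p A l (x i)) * ((\<Prod>l\<in>?J. (if y i l = x i l then 1 else 0)) * (\<Prod>l\<in>{1..k}-?J. lam p A l (y i)))"
        by (simp add: prod.distrib)
    qed
    also have "\<dots> = q x * ((\<Prod>i<n. \<Prod>l\<in>?J. (if y i l = x i l then 1 else 0)) * qc ?J y)"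
      by (simp add: prod.distrib q_def qc_def)
    also have "(\<Prod>i<n. \<Prod>l\<in>?J. (if y i l = x i l then 1 else (0::real))) = (if agreeJ ?J x y then 1 else 0)"
    proof (cases "agreeJ ?J x y")
      case True thus ?thesis by (auto simp: agreeJ_def intro!: prod.neutral)
    next
      case False
      then obtain i l where il: "i < n" "l \<in> ?J" "y i l \<noteq> x i l" by (auto simp: agreeJ_def)
      have fJ: "finite ?J" using Jsub by (rule finite_subset) auto
      have z: "(\<Prod>l\<in>?J. (if y i l = x i l then 1 else (0::real))) = 0"
        using il fJ by (intro prod_zero bexI[of _ l]) auto
      have "(\<Prod>i<n. \<Prod>l\<in>?J. (if y i l = x i l then 1 else (0::real))) = 0"
      proof (rule prod_zero)
        show "\<exists>a\<in>{..<n}. (\<Prod>l\<in>?J. (if y a l = x a l then 1 else (0::real))) = 0"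
        proof (rule bexI[of _ i])
          show "(\<Prod>l\<in>?J. (if y i l = x i l then 1 else (0::real))) = 0" by (rule z)
          show "i \<in> {..<n}" using il(1) by simp
        qed
      qed simp
      thus ?thesis using False by simp
    qed
    finally show ?thesis by simp
  qed
  have "measure ?M {c. Xm m c \<and> Xm m' c} = measure ?M (cb.DD k -` {d. typc (fst d) \<and> typc (snd d)})"
    by (simp add: X1 X2 vimage_def)
  also have "\<dots> = measure (map_pmf (cb.DD k) ?M) {d. typc (fst d) \<and> typc (snd d)}"
    by (simp add: measure_map_pmf)
  also have "\<dots> = measure (map_pmf (cb.DD k) ?M) ({d. typc (fst d) \<and> typc (snd d)} \<inter> cb.Shape k)"
  proof -
    have "{d. typc (fst d) \<and> typc (snd d)} \<inter> set_pmf (map_pmf (cb.DD k) ?M) = ({d. typc (fst d) \<and> typc (snd d)} \<inter> cb.Shape k) \<inter> set_pmf (map_pmf (cb.DD k) ?M)"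
      using supp by auto
    hence "measure (map_pmf (cb.DD k) ?M) ({d. typc (fst d) \<and> typc (snd d)} \<inter> set_pmf (map_pmf (cb.DD k) ?M))
        = measure (map_pmf (cb.DD k) ?M) (({d. typc (fst d) \<and> typc (snd d)} \<inter> cb.Shape k) \<inter> set_pmf (map_pmf (cb.DD k) ?M))"
      by (rule arg_cong)
    thus ?thesis by (simp only: measure_Int_set_pmf)
  qed
  also have "\<dots> = (\<Sum>d\<in>{d. typc (fst d) \<and> typc (snd d)} \<inter> cb.Shape k. pmf (map_pmf (cb.DD k) ?M) d)"
    by (rule measure_measure_pmf_finite) (use cb.finite_Shape in auto)
  also have "\<dots> = (\<Sum>d\<in>{x\<in>PS. typc x} \<times> {y\<in>PS. typc y}. cb.fac k d)"
  proof -
    have seteq: "{d. typc (fst d) \<and> typc (snd d)} \<inter> cb.Shape k = {x\<in>PS. typc x} \<times> {y\<in>PS. typc y}"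
      unfolding ShapeEq by auto
    show ?thesis unfolding seteq
    proof (rule sum.cong[OF refl])
      fix d assume "d \<in> {x\<in>PS. typc x} \<times> {y\<in>PS. typc y}"
      hence "d \<in> cb.Shape k" unfolding ShapeEq by auto
      thus "pmf (map_pmf (cb.DD k) ?M) d = cb.fac k d" using cb.pmf_DD[of k d] by simp
    qed
  qed
  also have "\<dots> = (\<Sum>x\<in>{x\<in>PS. typc x}. \<Sum>y\<in>{y\<in>PS. typc y}. cb.fac k (x, y))"
    by (simp add: sum.cartesian_product)
  finally show ?thesis by (simp add: fac_eq)
qed

definition tau :: real where "tau = (\<Sum>x\<in>{x\<in>PS. typc x}. q x)"
definition Ef :: "nat set \<Rightarrow> real" where "Ef J = (\<Sum>a\<in>SF. pmf pF a * fJ p A k J a)"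
definition Kf :: "nat set \<Rightarrow> real" where "Kf J = (\<Sum>a\<in>SF. pmf pF a * \<bar>fJ p A k J a\<bar>)"

lemma Ak: "l \<in> {1..k} \<Longrightarrow> A l \<subseteq> {1..k}" using A_sub by fastforce

lemma lam_prod_powr:
  assumes a: "a \<in> SF" and J: "J \<subseteq> {1..k}"
  shows "(\<Prod>l\<in>{1..k}-J. lam p A l (snd a)) = 2 powr (fJ p A k J a) * rho p k J a"
proof -
  have lp: "lam p A l (snd a) > 0" if "l \<in> {1..k}-J" for l
    using lam_pos[of a p k l A] a that Ak[of l] by auto
  have rp: "rho p k J a > 0" by (rule rho_pos[OF J a])
  have "2 powr (fJ p A k J a) = 2 powr (\<Sum>l\<in>{1..k}-J. log 2 (lam p A l (snd a))) / 2 powr (log 2 (rho p k J a))"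
    unfolding fJ_def by (rule powr_diff)
  also have "2 powr (\<Sum>l\<in>{1..k}-J. log 2 (lam p A l (snd a))) = (\<Prod>l\<in>{1..k}-J. 2 powr (log 2 (lam p A l (snd a))))"
    by (rule powr_sum) simp
  also have "\<dots> = (\<Prod>l\<in>{1..k}-J. lam p A l (snd a))"
    using lp by (intro prod.cong refl) simp
  also have "2 powr (log 2 (rho p k J a)) = rho p k J a" using rp by simp
  finally show ?thesis using rp by simp
qed

lemma typc_SF: "typc x \<Longrightarrow> i < n \<Longrightarrow> (us i, x i) \<in> SF"
  unfolding typc_def using typical_in_support by fastforce

lemma qc_powr:
  assumes "typc y" "J \<subseteq> {1..k}"
  shows "qc J y = 2 powr (\<Sum>i<n. fJ p A k J (us i, y i)) * (\<Prod>i<n. rho p k J (us i, y i))"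
proof -
  have "qc J y = (\<Prod>i<n. 2 powr (fJ p A k J (us i, y i)) * rho p k J (us i, y i))"
    unfolding qc_def using lam_prod_powr[OF typc_SF[OF assms(1)] assms(2)] by (intro prod.cong refl) auto
  also have "\<dots> = 2 powr (\<Sum>i<n. fJ p A k J (us i, y i)) * (\<Prod>i<n. rho p k J (us i, y i))"
    by (simp add: prod.distrib powr_sum)
  finally show ?thesis .
qed

lemma sum_fJ_bounds:
  assumes "typc y"
  shows "(\<Sum>i<n. fJ p A k J (us i, y i)) \<le> real n * (Ef J + eps * Kf J)"
    and "(\<Sum>i<n. fJ p A k J (us i, y i)) \<ge> real n * (Ef J - eps * Kf J)"
proof -
  have "\<bar>(\<Sum>i<n. fJ p A k J ((\<lambda>i. (us i, y i)) i)) - real n * (\<Sum>a\<in>SF. pmf pF a * fJ p A k J a)\<bar>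
        \<le> real n * eps * (\<Sum>a\<in>SF. pmf pF a * \<bar>fJ p A k J a\<bar>)"
    using assms by (intro typical_sum_bound[OF finSF _ npos]) (simp add: typc_def)
  hence "\<bar>(\<Sum>i<n. fJ p A k J (us i, y i)) - real n * Ef J\<bar> \<le> real n * eps * Kf J"
    by (simp add: Ef_def Kf_def)
  thus "(\<Sum>i<n. fJ p A k J (us i, y i)) \<le> real n * (Ef J + eps * Kf J)"
    and "(\<Sum>i<n. fJ p A k J (us i, y i)) \<ge> real n * (Ef J - eps * Kf J)"
    by (simp_all add: algebra_simps abs_le_iff)
qed

lemma slice_le1:
  assumes i: "i < n" and xi: "xi \<in> SSv vs k i" and J: "J \<subseteq> {1..k}"
  shows "(\<Sum>s\<in>{s\<in>SSv vs k i. \<forall>l\<in>J. s l = xi l}. rho p k J (us i, s)) \<le> 1"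
proof -
  let ?B = "{s\<in>SSv vs k i. \<forall>l\<in>J. s l = xi l}"
  let ?b = "prJ J (us i, xi)"
  let ?pJ = "marg_UV p (insert 0 J)"
  have finB: "finite ?B" using finite_SSv[of vs k i] by simp
  have pr: "prJ J (us i, s) = ?b" if "s \<in> ?B" for s
    using that xi by (auto simp: prJ_def SSv_def fun_eq_iff restrict_def)
  have "(\<Sum>s\<in>?B. rho p k J (us i, s)) = (\<Sum>s\<in>?B. pmf pF (us i, s)) / pmf ?pJ ?b"
    unfolding rho_def sum_divide_distrib using pr by (intro sum.cong refl) simp
  also have "(\<Sum>s\<in>?B. pmf pF (us i, s)) \<le> pmf ?pJ ?b"
  proof -
    have inj: "inj_on (\<lambda>s. (us i, s)) ?B" by (auto simp: inj_on_def)
    have "(\<Sum>s\<in>?B. pmf pF (us i, s)) = (\<Sum>a\<in>(\<lambda>s. (us i, s)) ` ?B. pmf pF a)"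
      by (simp add: sum.reindex[OF inj])
    also have "\<dots> = measure pF ((\<lambda>s. (us i, s)) ` ?B)"
      by (rule measure_measure_pmf_finite[symmetric]) (use finB in simp)
    also have "\<dots> \<le> measure pF (prJ J -` {?b})"
      using pr by (intro measure_pmf.finite_measure_mono) auto
    also have "\<dots> = pmf ?pJ ?b" using pJ_map[OF J, of p] by (simp add: pmf_map)
    finally show ?thesis .
  qed
  hence "(\<Sum>s\<in>?B. pmf pF (us i, s)) / pmf ?pJ ?b \<le> 1"
    by (cases "pmf ?pJ ?b = 0") (simp_all add: divide_le_eq_1)
  finally show ?thesis .
qed

lemma agree_set:
  "{y\<in>PS. agreeJ J x y} = PiE {..<n} (\<lambda>i. {s\<in>SSv vs k i. \<forall>l\<in>J. s l = x i l})"
  by (auto simp: PS_def agreeJ_def PiE_iff extensional_def)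

lemma inner_bound:
  assumes x: "x \<in> PS" "typc x" and J: "J \<subseteq> {1..k}"
  shows "(\<Sum>y\<in>{y\<in>PS. typc y}. if agreeJ J x y then qc J y else 0) \<le> 2 powr (real n * (Ef J + eps * Kf J))"
proof -
  let ?E = "2 powr (real n * (Ef J + eps * Kf J))"
  let ?R = "\<lambda>y. \<Prod>i<n. rho p k J (us i, y i)"
  have Rnn: "?R y \<ge> 0" for y by (intro prod_nonneg) (simp add: rho_nonneg)
  have "(\<Sum>y\<in>{y\<in>PS. typc y}. if agreeJ J x y then qc J y else 0)
      \<le> (\<Sum>y\<in>{y\<in>PS. typc y}. if agreeJ J x y then ?E * ?R y else 0)"
  proof (intro sum_mono)
    fix y assume y: "y \<in> {y\<in>PS. typc y}"
    have ty: "typc y" using y by simp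
    have "qc J y \<le> ?E * ?R y"
      unfolding qc_powr[OF ty J] using sum_fJ_bounds(1)[OF ty, of J] Rnn[of y]
      by (intro mult_right_mono) auto
    thus "(if agreeJ J x y then qc J y else 0) \<le> (if agreeJ J x y then ?E * ?R y else 0)" by simp
  qed
  also have "\<dots> \<le> (\<Sum>y\<in>PS. if agreeJ J x y then ?E * ?R y else 0)"
    using finite_PS Rnn by (intro sum_mono2) auto
  also have "\<dots> = ?E * (\<Sum>y\<in>{y\<in>PS. agreeJ J x y}. ?R y)"
    by (simp add: sum.inter_filter[OF finite_PS] sum_distrib_left if_distrib cong: if_cong)
  also have "(\<Sum>y\<in>{y\<in>PS. agreeJ J x y}. ?R y) = (\<Prod>i<n. \<Sum>s\<in>{s\<in>SSv vs k i. \<forall>l\<in>J. s l = x i l}. rho p k J (us i, s))"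
    unfolding agree_set by (rule prod_sum_PiE[symmetric]) (auto simp: finite_SSv)
  also have "\<dots> \<le> (\<Prod>i<n. (1::real))"
  proof (intro prod_mono conjI)
    fix i assume i: "i \<in> {..<n}"
    have "x i \<in> SSv vs k i" using x i by (auto simp: PS_def)
    thus "(\<Sum>s\<in>{s\<in>SSv vs k i. \<forall>l\<in>J. s l = x i l}. rho p k J (us i, s)) \<le> 1"
      using slice_le1 i J by auto
    show "0 \<le> (\<Sum>s\<in>{s\<in>SSv vs k i. \<forall>l\<in>J. s l = x i l}. rho p k J (us i, s))"
      by (intro sum_nonneg) (simp add: rho_nonneg)
  qed
  finally show ?thesis by simp
qed

lemma tau_lb: "tau \<ge> 2 powr (real n * (Ef {} - eps * Kf {})) * (\<Sum>x\<in>{x\<in>PS. typc x}. W x)"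
proof -
  have "2 powr (real n * (Ef {} - eps * Kf {})) * (\<Sum>x\<in>{x\<in>PS. typc x}. W x)
      = (\<Sum>x\<in>{x\<in>PS. typc x}. 2 powr (real n * (Ef {} - eps * Kf {})) * W x)"
    by (simp add: sum_distrib_left)
  also have "\<dots> \<le> (\<Sum>x\<in>{x\<in>PS. typc x}. q x)"
  proof (intro sum_mono)
    fix x assume x: "x \<in> {x\<in>PS. typc x}"
    have "q x = qc {} x" by (simp add: q_def qc_def)
    also have "\<dots> = 2 powr (\<Sum>i<n. fJ p A k {} (us i, x i)) * W x"
      using x by (simp add: qc_powr W_def w_def)
    finally have qx: "q x = 2 powr (\<Sum>i<n. fJ p A k {} (us i, x i)) * W x" .
    show "2 powr (real n * (Ef {} - eps * Kf {})) * W x \<le> q x"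
      unfolding qx using sum_fJ_bounds(2)[of x "{}"] x W_nonneg[of x]
      by (intro mult_right_mono) auto
  qed
  finally show ?thesis by (simp add: tau_def)
qed

lemma pair_empty:
  "(\<Sum>x\<in>{x\<in>PS. typc x}. \<Sum>y\<in>{y\<in>PS. typc y}. q x * (if agreeJ {} x y then qc {} y else 0)) = tau^2"
proof -
  have "qc {} y = q y" for y by (simp add: qc_def q_def)
  hence "(\<Sum>x\<in>{x\<in>PS. typc x}. \<Sum>y\<in>{y\<in>PS. typc y}. q x * (if agreeJ {} x y then qc {} y else 0))
     = (\<Sum>x\<in>{x\<in>PS. typc x}. \<Sum>y\<in>{y\<in>PS. typc y}. q x * q y)"
    by (simp add: agreeJ_def)
  also have "\<dots> = tau^2" by (simp add: tau_def power2_eq_square sum_product)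
  finally show ?thesis .
qed

lemma pair_full:
  "(\<Sum>x\<in>{x\<in>PS. typc x}. \<Sum>y\<in>{y\<in>PS. typc y}. q x * (if agreeJ {1..k} x y then qc {1..k} y else 0)) = tau"
proof -
  have "(\<Sum>y\<in>{y\<in>PS. typc y}. q x * (if agreeJ {1..k} x y then qc {1..k} y else 0)) = q x"
    if x: "x \<in> {x\<in>PS. typc x}" for x
  proof -
    have eq: "agreeJ {1..k} x y \<longleftrightarrow> y = x" if y: "y \<in> PS" for y
    proof
      assume ag: "agreeJ {1..k} x y"
      show "y = x"
      proof
        fix i show "y i = x i"
        proof (cases "i < n")
          case True
          have "y i \<in> SSv vs k i" "x i \<in> SSv vs k i" using x y True by (auto simp: PS_def)
          hence e: "y i \<in> extensional {0..k}" "x i \<in> extensional {0..k}" "y i 0 = vs i" "x i 0 = vs i"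
            by (auto simp: SSv_def PiE_iff)
          show ?thesis
          proof
            fix l show "y i l = x i l"
            proof (cases "l = 0")
              case True thus ?thesis using e by simp
            next
              case False
              show ?thesis
              proof (cases "l \<le> k")
                case True
                hence "l \<in> {1..k}" using False by auto
                thus ?thesis using ag \<open>i < n\<close> by (simp add: agreeJ_def)
              next
                case False2: False
                hence "l \<notin> {0..k}" by auto
                thus ?thesis using e by (simp add: extensional_def)
              qed
            qed
          qed
        next
          case False thus ?thesis using x y by (auto simp: PS_def PiE_iff extensional_def)
        qed
      qed
    qed (simp add: agreeJ_def)
    have "(\<Sum>y\<in>{y\<in>PS. typc y}. q x * (if agreeJ {1..k} x y then qc {1..k} y else 0))
        = (\<Sum>y\<in>{y\<in>PS. typc y}. if y = x then q x else 0)"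
    proof (intro sum.cong refl)
      fix y assume "y \<in> {y\<in>PS. typc y}"
      hence "agreeJ {1..k} x y \<longleftrightarrow> y = x" using eq by auto
      thus "q x * (if agreeJ {1..k} x y then qc {1..k} y else 0) = (if y = x then q x else 0)"
        by (simp add: qc_def)
    qed
    also have "\<dots> = q x" using x finite_PS by (simp add: sum.delta')
    finally show ?thesis .
  qed
  thus ?thesis by (simp add: tau_def)
qed

end

lemma integrable_bounded_pmf:
  fixes f :: "'a \<Rightarrow> real"
  assumes "\<And>x. \<bar>f x\<bar> \<le> B"
  shows "integrable (measure_pmf G) f"
  by (rule measure_pmf.integrable_const_bound[where B=B]) (use assms in auto)

lemma measure_bind_pmf':
  "measure (measure_pmf (M \<bind> N)) X = (\<integral>x. measure (measure_pmf (N x)) X \<partial>measure_pmf M)"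
proof -
  have "emeasure (measure_pmf (M \<bind> N)) X = (\<integral>\<^sup>+ x. emeasure (measure_pmf (N x)) X \<partial>measure_pmf M)"
    by (rule emeasure_bind_pmf)
  also have "\<dots> = (\<integral>\<^sup>+ x. ennreal (measure (measure_pmf (N x)) X) \<partial>measure_pmf M)"
    by (simp add: measure_pmf.emeasure_eq_measure)
  also have "\<dots> = ennreal (\<integral>x. measure (measure_pmf (N x)) X \<partial>measure_pmf M)"
    by (rule nn_integral_eq_integral)
       (auto intro!: integrable_bounded_pmf[where B=1])
  finally show ?thesis
    by (simp add: measure_pmf.emeasure_eq_measure integral_nonneg_AE)
qed

lemma second_moment:
  fixes G :: "'c pmf" and X :: "'m \<Rightarrow> 'c \<Rightarrow> bool"
  assumes fin: "finite Ms"
    and mu: "mu = (\<Sum>m\<in>Ms. measure G {c. X m c})" and mupos: "mu > 0"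
    and sq: "(\<Sum>m\<in>Ms. \<Sum>m'\<in>Ms. measure G {c. X m c \<and> X m' c}) \<le> mu^2 * (1 + eta)"
  shows "measure G {c. \<exists>m\<in>Ms. X m c} \<ge> 1 - eta"
proof -
  define ind where "ind = (\<lambda>m c. if X m c then (1::real) else 0)"
  define N where "N = (\<lambda>c. \<Sum>m\<in>Ms. ind m c)"
  have ind01: "0 \<le> ind m c \<and> ind m c \<le> 1" for m c by (simp add: ind_def)
  have Nb: "\<bar>N c\<bar> \<le> real (card Ms)" for c
  proof -
    have "N c \<ge> 0" unfolding N_def using ind01 by (intro sum_nonneg) auto
    moreover have "N c \<le> (\<Sum>m\<in>Ms. 1)" unfolding N_def using ind01 by (intro sum_mono) auto
    ultimately show ?thesis by simp
  qed
  have int_ind: "(\<integral>c. ind m c \<partial>G) = measure G {c. X m c}" for m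
  proof -
    have "(\<lambda>c. ind m c) = indicator {c. X m c}" by (auto simp: ind_def fun_eq_iff)
    thus ?thesis by simp
  qed
  have int_ind2: "(\<integral>c. ind m c * ind m' c \<partial>G) = measure G {c. X m c \<and> X m' c}" for m m'
  proof -
    have "(\<lambda>c. ind m c * ind m' c) = indicator {c. X m c \<and> X m' c}" by (auto simp: ind_def fun_eq_iff)
    thus ?thesis by simp
  qed
  have iN: "integrable G N" using Nb by (intro integrable_bounded_pmf) 
  have intN: "(\<integral>c. N c \<partial>G) = mu"
  proof -
    have "(\<integral>c. N c \<partial>G) = (\<Sum>m\<in>Ms. \<integral>c. ind m c \<partial>G)"
      unfolding N_def by (rule Bochner_Integration.integral_sum) (rule integrable_bounded_pmf[where B=1], simp add: ind_def)
    thus ?thesis by (simp add: int_ind mu)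
  qed
  have N2: "N c * N c = (\<Sum>m\<in>Ms. \<Sum>m'\<in>Ms. ind m c * ind m' c)" for c
    unfolding N_def by (simp add: sum_product)
  have intN2: "(\<integral>c. N c * N c \<partial>G) = (\<Sum>m\<in>Ms. \<Sum>m'\<in>Ms. measure G {c. X m c \<and> X m' c})"
  proof -
    have ii: "integrable G (\<lambda>c. ind m c * ind m' c)" for m m'
      by (rule integrable_bounded_pmf[where B=1]) (simp add: ind_def)
    have "(\<integral>c. N c * N c \<partial>G) = (\<Sum>m\<in>Ms. \<integral>c. (\<Sum>m'\<in>Ms. ind m c * ind m' c) \<partial>G)"
      unfolding N2 by (rule Bochner_Integration.integral_sum) (intro Bochner_Integration.integrable_sum ii)
    also have "\<dots> = (\<Sum>m\<in>Ms. \<Sum>m'\<in>Ms. \<integral>c. ind m c * ind m' c \<partial>G)"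
      by (intro sum.cong refl Bochner_Integration.integral_sum ii)
    finally show ?thesis by (simp add: int_ind2)
  qed
  have iN2: "integrable G (\<lambda>c. N c * N c)"
  proof (rule integrable_bounded_pmf[where B="real (card Ms) * real (card Ms)"])
    fix c
    have "\<bar>N c\<bar> * \<bar>N c\<bar> \<le> real (card Ms) * real (card Ms)" using Nb[of c] by (intro mult_mono) auto
    thus "\<bar>N c * N c\<bar> \<le> real (card Ms) * real (card Ms)" by (simp add: abs_mult)
  qed
  have pw: "indicator {c. \<not> (\<exists>m\<in>Ms. X m c)} c \<le> (N c * N c - 2 * mu * N c + mu^2) / mu^2" for c
  proof (cases "\<exists>m\<in>Ms. X m c")
    case True
    have "(N c * N c - 2 * mu * N c + mu^2) = (N c - mu)^2" by (simp add: power2_eq_square algebra_simps)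
    hence "(N c * N c - 2 * mu * N c + mu^2) / mu^2 \<ge> 0" by simp
    thus ?thesis using True by simp
  next
    case False
    hence "N c = 0" unfolding N_def ind_def by (intro sum.neutral) auto
    thus ?thesis using False mupos by simp
  qed
  have "measure G {c. \<not> (\<exists>m\<in>Ms. X m c)} = (\<integral>c. indicator {c. \<not> (\<exists>m\<in>Ms. X m c)} c \<partial>G)"
    by simp
  also have "\<dots> \<le> (\<integral>c. (N c * N c - 2 * mu * N c + mu^2) / mu^2 \<partial>G)"
  proof (rule integral_mono[OF _ _ pw])
    show "integrable G (indicator {c. \<not> (\<exists>m\<in>Ms. X m c)} :: _ \<Rightarrow> real)"
      by (rule integrable_bounded_pmf[where B=1]) simp
    show "integrable G (\<lambda>c. (N c * N c - 2 * mu * N c + mu^2) / mu^2)"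
      by (intro Bochner_Integration.integrable_divide Bochner_Integration.integrable_add
           Bochner_Integration.integrable_diff iN2 Bochner_Integration.integrable_mult_right iN) simp
  qed
  also have "\<dots> = ((\<integral>c. N c * N c \<partial>G) - 2 * mu * (\<integral>c. N c \<partial>G) + mu^2) / mu^2"
    using iN iN2 by (simp add: Bochner_Integration.integral_diff Bochner_Integration.integral_add)
  also have "\<dots> \<le> (mu^2 * (1 + eta) - 2 * mu * mu + mu^2) / mu^2"
    unfolding intN intN2 using sq mupos by (intro divide_right_mono) auto
  also have "\<dots> = eta" using mupos by (simp add: field_simps power2_eq_square)
  finally have "measure G {c. \<not> (\<exists>m\<in>Ms. X m c)} \<le> eta" .
  moreover have "measure G {c. \<exists>m\<in>Ms. X m c} = 1 - measure G {c. \<not> (\<exists>m\<in>Ms. X m c)}"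
  proof -
    have "{c. \<not> (\<exists>m\<in>Ms. X m c)} = - {c. \<exists>m\<in>Ms. X m c}" by auto
    hence "measure G {c. \<not> (\<exists>m\<in>Ms. X m c)} = 1 - measure G {c. \<exists>m\<in>Ms. X m c}"
      using measure_pmf.prob_compl[of "{c. \<exists>m\<in>Ms. X m c}" G] by (simp add: Compl_eq_Diff_UNIV)
    thus ?thesis by simp
  qed
  ultimately show ?thesis by simp
qed


lemma num_msgs_ge:
  assumes "r \<ge> 0"
  shows "real (num_msgs r n) \<ge> 2 powr (real n * r) / 2" "num_msgs r n \<ge> 1"
proof -
  have x1: "2 powr (real n * r) \<ge> 1" using assms by (intro ge_one_powr_ge_zero) auto
  have "real (num_msgs r n) = of_int \<lfloor>2 powr (real n * r)\<rfloor>"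
    unfolding num_msgs_def using x1 by simp
  moreover have "of_int \<lfloor>2 powr (real n * r)\<rfloor> \<ge> 2 powr (real n * r) - 1" by linarith
  moreover have f1: "\<lfloor>2 powr (real n * r)\<rfloor> \<ge> 1" using x1 by (simp add: le_floor_iff)
  moreover have "real_of_int \<lfloor>2 powr (real n * r)\<rfloor> \<ge> 1" using f1 by simp
  ultimately show "real (num_msgs r n) \<ge> 2 powr (real n * r) / 2" using x1 by linarith
  show "num_msgs r n \<ge> 1" using f1 unfolding num_msgs_def by linarith
qed

lemma card_msgs: "card (msgs L k) = (\<Prod>j\<in>{1..k}. L j)"
  unfolding msgs_def by (simp add: card_PiE)

lemma finite_msgs: "finite (msgs L k)"
  unfolding msgs_def by (intro finite_PiE) auto

lemma count_agree:
  assumes m: "m \<in> msgs L k" and J: "J \<subseteq> {1..k}"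
  shows "card {m'\<in>msgs L k. \<forall>j\<in>J. m' j = m j} = (\<Prod>j\<in>{1..k}-J. L j)"
proof -
  have "{m'\<in>msgs L k. \<forall>j\<in>J. m' j = m j} = PiE {1..k} (\<lambda>j. if j \<in> J then {m j} else {1..L j})"
  proof (intro equalityI subsetI)
    fix m' assume "m' \<in> {m'\<in>msgs L k. \<forall>j\<in>J. m' j = m j}"
    hence m': "m' \<in> PiE {1..k} (\<lambda>j. {1..L j})" "\<forall>j\<in>J. m' j = m j" by (auto simp: msgs_def)
    show "m' \<in> PiE {1..k} (\<lambda>j. if j \<in> J then {m j} else {1..L j})"
      unfolding PiE_iff
    proof (intro conjI ballI)
      fix j assume "j \<in> {1..k}"
      thus "m' j \<in> (if j \<in> J then {m j} else {1..L j})" using m' by (auto simp: PiE_iff)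
    next
      show "m' \<in> extensional {1..k}" using m' by (auto simp: PiE_iff)
    qed
  next
    fix m' assume m': "m' \<in> PiE {1..k} (\<lambda>j. if j \<in> J then {m j} else {1..L j})"
    have mm: "m \<in> PiE {1..k} (\<lambda>j. {1..L j})" using m by (simp add: msgs_def)
    have "m' \<in> PiE {1..k} (\<lambda>j. {1..L j})"
      unfolding PiE_iff
    proof (intro conjI ballI)
      fix j assume j: "j \<in> {1..k}"
      show "m' j \<in> {1..L j}"
      proof (cases "j \<in> J")
        case True
        have "m' j \<in> (if j \<in> J then {m j} else {1..L j})" using m' j by (simp add: PiE_iff)
        hence "m' j = m j" using True by simp
        thus ?thesis using mm j by (auto simp: PiE_iff)
      next
        case False
        have "m' j \<in> (if j \<in> J then {m j} else {1..L j})" using m' j by (simp add: PiE_iff)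
        thus ?thesis using False by simp
      qed
    next
      show "m' \<in> extensional {1..k}" using m' by (auto simp: PiE_iff)
    qed
    moreover have "\<forall>j\<in>J. m' j = m j"
    proof
      fix j assume j: "j \<in> J"
      hence "j \<in> {1..k}" using J by auto
      hence "m' j \<in> (if j \<in> J then {m j} else {1..L j})" using m' by (simp add: PiE_iff)
      thus "m' j = m j" using j by simp
    qed
    ultimately show "m' \<in> {m'\<in>msgs L k. \<forall>j\<in>J. m' j = m j}" by (simp add: msgs_def)
  qed
  hence "card {m'\<in>msgs L k. \<forall>j\<in>J. m' j = m j} = (\<Prod>j\<in>{1..k}. card (if j \<in> J then {m j} else {1..L j}))"
    by (simp add: card_PiE)
  also have "\<dots> = (\<Prod>j\<in>{1..k}-J. card (if j \<in> J then {m j} else {1..L j})) * (\<Prod>j\<in>J. card (if j \<in> J then {m j} else {1..L j}))"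
    using J by (intro prod.subset_diff) auto
  also have "(\<Prod>j\<in>J. card (if j \<in> J then {m j} else {1..L j})) = 1" by (intro prod.neutral) auto
  also have "(\<Prod>j\<in>{1..k}-J. card (if j \<in> J then {m j} else {1..L j})) = (\<Prod>j\<in>{1..k}-J. L j)"
    by (intro prod.cong) auto
  finally show ?thesis by simp
qed

lemma count_agree_sum:
  assumes J: "J \<subseteq> {1..k}"
  shows "(\<Sum>m\<in>msgs L k. \<Sum>m'\<in>msgs L k. if \<forall>j\<in>J. m j = m' j then (1::real) else 0)
     = real (card (msgs L k)) * (\<Prod>j\<in>{1..k}-J. real (L j))"
proof -
  have "(\<Sum>m'\<in>msgs L k. if \<forall>j\<in>J. m j = m' j then (1::real) else 0) = (\<Prod>j\<in>{1..k}-J. real (L j))"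
    if m: "m \<in> msgs L k" for m
  proof -
    have "(\<Sum>m'\<in>msgs L k. if \<forall>j\<in>J. m j = m' j then (1::real) else 0) = real (card {m'\<in>msgs L k. \<forall>j\<in>J. m' j = m j})"
      using finite_msgs by (simp add: sum.inter_filter[symmetric] eq_commute)
    also have "\<dots> = (\<Prod>j\<in>{1..k}-J. real (L j))" using count_agree[OF m J] by simp
    finally show ?thesis .
  qed
  thus ?thesis by simp
qed

context Eloc begin

lemma Agr_sub: "Agr m m' \<subseteq> {1..k}" by (auto simp: Agr_def)

lemma Agr_eq: "l \<in> Agr m m' \<Longrightarrow> m l = m' l"
  unfolding Agr_def by (auto simp: fun_eq_iff restrict_def) (metis insertI1)

lemma Agr_closed: "l \<in> Agr m m' \<Longrightarrow> A l \<subseteq> Agr m m'"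
proof
  fix a assume l: "l \<in> Agr m m'" and a: "a \<in> A l"
  have lk: "l \<in> {1..k}" using l by (auto simp: Agr_def)
  have ak: "a \<in> {1..k}" using a Ak[OF lk] by auto
  have "A a \<subseteq> A l" using A_cl lk a by blast
  hence sub: "insert a (A a) \<subseteq> insert l (A l)" using a by auto
  have "restrict m (insert l (A l)) = restrict m' (insert l (A l))" using l by (simp add: Agr_def)
  hence eq: "m x = m' x" if "x \<in> insert l (A l)" for x
  proof -
    have "restrict m (insert l (A l)) x = restrict m' (insert l (A l)) x"
      using \<open>restrict m (insert l (A l)) = restrict m' (insert l (A l))\<close> by (rule fun_cong)
    thus ?thesis using that by (simp add: restrict_def split: if_splits)
  qed
  have "restrict m (insert a (A a)) = restrict m' (insert a (A a))"
  proof
    fix x show "restrict m (insert a (A a)) x = restrict m' (insert a (A a)) x"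
      using eq sub by (cases "x \<in> insert a (A a)") auto
  qed
  thus "a \<in> Agr m m'" using ak by (simp add: Agr_def)
qed

lemma Agr_self: "Agr m m = {1..k}" by (auto simp: Agr_def)

definition CJ :: "nat set set" where "CJ = {J. J \<subseteq> {1..k} \<and> J \<noteq> {} \<and> (\<forall>j\<in>J. A j \<subseteq> J)}"
definition Bnd :: "nat set \<Rightarrow> real" where "Bnd J = 2 powr (real n * (Ef J + eps * Kf J))"

lemma finite_CJ: "finite CJ"
  by (rule finite_subset[of _ "Pow {1..k}"]) (auto simp: CJ_def)

lemma q_nonneg: "q x \<ge> 0" unfolding q_def lam_def by (intro prod_nonneg) auto

lemma tau_nonneg: "tau \<ge> 0" unfolding tau_def by (intro sum_nonneg q_nonneg)

lemma pair_le:
  assumes mm: "m \<in> msgs L k" "m' \<in> msgs L k"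
  shows "measure (canon_cb p A L n vs k) {c. Xm m c \<and> Xm m' c}
     \<le> tau^2 + (\<Sum>J\<in>CJ. if (\<forall>j\<in>J. m j = m' j) then tau * Bnd J else 0)"
proof -
  let ?J = "Agr m m'"
  let ?S = "(\<Sum>x\<in>{x\<in>PS. typc x}. \<Sum>y\<in>{y\<in>PS. typc y}. q x * (if agreeJ ?J x y then qc ?J y else 0))"
  have P: "measure (canon_cb p A L n vs k) {c. Xm m c \<and> Xm m' c} = ?S" by (rule pair_prob[OF mm])
  have nn: "0 \<le> (\<Sum>J\<in>CJ. if (\<forall>j\<in>J. m j = m' j) then tau * Bnd J else 0)"
    using tau_nonneg by (intro sum_nonneg) (auto simp: Bnd_def)
  show ?thesis
  proof (cases "?J = {}")
    case True
    have "?S = tau^2" unfolding True by (rule pair_empty)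
    thus ?thesis using P nn by simp
  next
    case False
    have J0: "?J \<in> CJ" using False Agr_sub Agr_closed by (auto simp: CJ_def)
    have ag: "\<forall>j\<in>?J. m j = m' j" using Agr_eq by blast
    have "?S \<le> (\<Sum>x\<in>{x\<in>PS. typc x}. q x * Bnd ?J)"
    proof (intro sum_mono)
      fix x assume x: "x \<in> {x\<in>PS. typc x}"
      have "(\<Sum>y\<in>{y\<in>PS. typc y}. q x * (if agreeJ ?J x y then qc ?J y else 0))
          = q x * (\<Sum>y\<in>{y\<in>PS. typc y}. if agreeJ ?J x y then qc ?J y else 0)"
        by (simp add: sum_distrib_left)
      also have "\<dots> \<le> q x * Bnd ?J"
        using inner_bound[of x ?J] x Agr_sub q_nonneg[of x] unfolding Bnd_def
        by (intro mult_left_mono) auto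
      finally show "(\<Sum>y\<in>{y\<in>PS. typc y}. q x * (if agreeJ ?J x y then qc ?J y else 0)) \<le> q x * Bnd ?J" .
    qed
    also have "\<dots> = tau * Bnd ?J" by (simp add: tau_def sum_distrib_right)
    also have "\<dots> = (if (\<forall>j\<in>?J. m j = m' j) then tau * Bnd ?J else 0)" using ag by simp
    also have "\<dots> \<le> (\<Sum>J\<in>CJ. if (\<forall>j\<in>J. m j = m' j) then tau * Bnd J else 0)"
      using J0 finite_CJ tau_nonneg
      by (intro member_le_sum[where f="\<lambda>J. if (\<forall>j\<in>J. m j = m' j) then tau * Bnd J else 0"]) (auto simp: Bnd_def)
    finally show ?thesis using P tau_nonneg by (simp add: power2_eq_square) (smt (verit) mult_nonneg_nonneg)
  qed
qed

lemma main_sum: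
  "(\<Sum>m\<in>msgs L k. \<Sum>m'\<in>msgs L k. measure (canon_cb p A L n vs k) {c. Xm m c \<and> Xm m' c})
    \<le> real (card (msgs L k))^2 * tau^2
       + (\<Sum>J\<in>CJ. tau * Bnd J * (real (card (msgs L k)) * (\<Prod>j\<in>{1..k}-J. real (L j))))"
proof -
  let ?Ms = "msgs L k"
  have "(\<Sum>m\<in>?Ms. \<Sum>m'\<in>?Ms. measure (canon_cb p A L n vs k) {c. Xm m c \<and> Xm m' c})
      \<le> (\<Sum>m\<in>?Ms. \<Sum>m'\<in>?Ms. tau^2 + (\<Sum>J\<in>CJ. tau * Bnd J * (if (\<forall>j\<in>J. m j = m' j) then 1 else 0)))"
    using pair_le by (intro sum_mono) (simp add: if_distrib cong: if_cong)
  also have "\<dots> = real (card ?Ms)^2 * tau^2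
      + (\<Sum>J\<in>CJ. tau * Bnd J * (\<Sum>m\<in>?Ms. \<Sum>m'\<in>?Ms. if (\<forall>j\<in>J. m j = m' j) then 1 else 0))"
    by (simp add: sum.distrib sum_distrib_left sum.swap[of _ CJ] power2_eq_square)
  also have "\<dots> = real (card ?Ms)^2 * tau^2
      + (\<Sum>J\<in>CJ. tau * Bnd J * (real (card ?Ms) * (\<Prod>j\<in>{1..k}-J. real (L j))))"
    by (intro arg_cong2[where f="(+)"] refl sum.cong) (auto simp: CJ_def count_agree_sum)
  finally show ?thesis .
qed

lemma Xm_cw:
  "Xm m c \<longleftrightarrow> (\<lambda>i. (us i, restrict (\<lambda>j. if j = 0 then vs i else codewords A k n c m j i) {0..k})) \<in> typical pF eps n"
  unfolding Xm_def
proof (rule typical_cong)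
  fix i assume i: "i < n"
  have "restrict (\<lambda>j. if j = 0 then vs i else c j (restrict m (insert j (A j))) i) {0..k}
      = restrict (\<lambda>j. if j = 0 then vs i else codewords A k n c m j i) {0..k}"
    using i by (auto simp: fun_eq_iff restrict_def codewords_def)
  thus "joint_seq A k us vs c m i = (us i, restrict (\<lambda>j. if j = 0 then vs i else codewords A k n c m j i) {0..k})"
    by (simp add: joint_seq_def)
qed

lemma prod_L_lb:
  assumes L_def: "L = (\<lambda>j. num_msgs (r j) n)" and r0: "\<forall>j\<in>{1..k}. r j \<ge> 0" and J: "J \<subseteq> {1..k}"
  shows "(\<Prod>j\<in>J. real (L j)) \<ge> 2 powr (real n * (\<Sum>j\<in>J. r j)) / 2 ^ card J"
proof -
  have "2 powr (real n * (\<Sum>j\<in>J. r j)) / 2 ^ card J = (\<Prod>j\<in>J. 2 powr (real n * r j) / 2)"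
    by (simp add: sum_distrib_left powr_sum prod_dividef)
  also have "\<dots> \<le> (\<Prod>j\<in>J. real (L j))"
  proof (intro prod_mono conjI)
    fix j assume j: "j \<in> J"
    hence "r j \<ge> 0" using J r0 by auto
    hence "2 powr (real n * r j) / 2 \<le> real (num_msgs (r j) n)" by (rule num_msgs_ge(1))
    thus "2 powr (real n * r j) / 2 \<le> real (L j)" by (simp add: L_def)
    show "0 \<le> 2 powr (real n * r j) / 2" by simp
  qed
  finally show ?thesis .
qed

lemma succ_lb:
  fixes G :: "'v codebook pmf" and r :: "nat \<Rightarrow> real"
  assumes L_def: "L = (\<lambda>j. num_msgs (r j) n)" and r0: "\<forall>j\<in>{1..k}. r j \<ge> 0"
    and Ghyp: "\<forall>m\<in>msgs L k. \<forall>m'\<in>msgs L k.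
       map_pmf (\<lambda>c. (codewords A k n c m, codewords A k n c m')) G
     = map_pmf (\<lambda>c. (codewords A k n c m, codewords A k n c m')) (canon_cb p A L n vs k)"
    and half: "(\<Sum>x\<in>{x\<in>PS. typc x}. W x) \<ge> 1/2"
  shows "measure G {c. \<exists>m\<in>msgs L k. Xm m c} \<ge>
    1 - (\<Sum>J\<in>CJ. 2 ^ (card J + 1) * 2 powr (real n * (Ef J - Ef {} + eps * (Kf J + Kf {}) - (\<Sum>j\<in>J. r j))))"
proof -
  let ?Ms = "msgs L k"
  let ?C = "canon_cb p A L n vs k"
  define Phi where "Phi = (\<lambda>w. (\<lambda>i. (us i, restrict (\<lambda>j. if j = 0 then vs i else w j i) {0..k})) \<in> typical pF eps n)"
  have PG: "measure G {c. Xm m c \<and> Xm m' c} = measure ?C {c. Xm m c \<and> Xm m' c}"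
    if mm: "m \<in> ?Ms" "m' \<in> ?Ms" for m m'
  proof -
    let ?f = "\<lambda>c. (codewords A k n c m, codewords A k n c m')"
    have XP: "Xm mm c \<longleftrightarrow> Phi (codewords A k n c mm)" for mm c unfolding Xm_cw Phi_def ..
    have "{c. Xm m c \<and> Xm m' c} = ?f -` {z. Phi (fst z) \<and> Phi (snd z)}"
      unfolding vimage_def XP by simp
    hence "measure G {c. Xm m c \<and> Xm m' c} = measure (map_pmf ?f G) {z. Phi (fst z) \<and> Phi (snd z)}"
      "measure ?C {c. Xm m c \<and> Xm m' c} = measure (map_pmf ?f ?C) {z. Phi (fst z) \<and> Phi (snd z)}"
      by (simp_all add: measure_map_pmf)
    thus ?thesis using Ghyp mm by simp
  qed
  have Lpos: "real (L j) \<ge> 1" if "j \<in> {1..k}" for j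
    using num_msgs_ge(2)[of "r j" n] r0 that by (simp add: L_def)
  define M where "M = real (card ?Ms)"
  have Mprod: "M = (\<Prod>j\<in>{1..k}. real (L j))" by (simp add: M_def card_msgs)
  have Mpos: "M > 0" unfolding Mprod using Lpos by (intro prod_pos) (auto intro: less_le_trans[OF zero_less_one])
  define E0 where "E0 = 2 powr (real n * (Ef {} - eps * Kf {}))"
  have E0pos: "E0 > 0" by (simp add: E0_def)
  have tau_lb2: "tau \<ge> E0 / 2"
  proof -
    have a: "E0 * (\<Sum>x\<in>{x\<in>PS. typc x}. W x) \<le> tau" using tau_lb unfolding E0_def .
    have "E0 * (1/2) \<le> E0 * (\<Sum>x\<in>{x\<in>PS. typc x}. W x)" using half E0pos by (intro mult_left_mono) auto
    thus ?thesis using a by simp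
  qed
  have taupos: "tau > 0" using tau_lb2 E0pos by linarith
  have single: "measure G {c. Xm m c} = tau" if m: "m \<in> ?Ms" for m
  proof -
    have "measure G {c. Xm m c} = measure G {c. Xm m c \<and> Xm m c}" by simp
    also have "\<dots> = measure ?C {c. Xm m c \<and> Xm m c}" by (rule PG[OF m m])
    also have "\<dots> = tau" using pair_prob[OF m m] pair_full unfolding Agr_self by simp
    finally show ?thesis .
  qed
  have mu: "M * tau = (\<Sum>m\<in>?Ms. measure G {c. Xm m c})" by (simp add: single M_def)
  define eta where "eta = (\<Sum>J\<in>CJ. Bnd J / (tau * (\<Prod>j\<in>J. real (L j))))"
  have sq: "(\<Sum>m\<in>?Ms. \<Sum>m'\<in>?Ms. measure G {c. Xm m c \<and> Xm m' c}) \<le> (M * tau)^2 * (1 + eta)"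
  proof -
    have "(\<Sum>m\<in>?Ms. \<Sum>m'\<in>?Ms. measure G {c. Xm m c \<and> Xm m' c}) = (\<Sum>m\<in>?Ms. \<Sum>m'\<in>?Ms. measure ?C {c. Xm m c \<and> Xm m' c})"
      using PG by (intro sum.cong refl) auto
    also have "\<dots> \<le> M^2 * tau^2 + (\<Sum>J\<in>CJ. tau * Bnd J * (M * (\<Prod>j\<in>{1..k}-J. real (L j))))"
      using main_sum by (simp add: M_def)
    also have "(\<Sum>J\<in>CJ. tau * Bnd J * (M * (\<Prod>j\<in>{1..k}-J. real (L j)))) = (M * tau)^2 * eta"
      unfolding eta_def sum_distrib_left
    proof (intro sum.cong refl)
      fix J assume J: "J \<in> CJ"
      hence Jk: "J \<subseteq> {1..k}" by (auto simp: CJ_def)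
      have PJ: "(\<Prod>j\<in>J. real (L j)) > 0"
      proof (intro prod_pos)
        fix j assume "j \<in> J"
        hence "real (L j) \<ge> 1" using Lpos Jk by auto
        thus "real (L j) > 0" by linarith
      qed
      have "M = (\<Prod>j\<in>{1..k}-J. real (L j)) * (\<Prod>j\<in>J. real (L j))"
        unfolding Mprod using Jk by (intro prod.subset_diff) auto
      thus "tau * Bnd J * (M * (\<Prod>j\<in>{1..k}-J. real (L j))) = (M * tau)^2 * (Bnd J / (tau * (\<Prod>j\<in>J. real (L j))))"
        using PJ taupos by (simp add: field_simps power2_eq_square)
    qed
    finally show ?thesis by (simp add: algebra_simps power2_eq_square)
  qed
  have "measure G {c. \<exists>m\<in>?Ms. Xm m c} \<ge> 1 - eta"
    by (rule second_moment[OF finite_msgs mu _ sq]) (use Mpos taupos in simp)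
  moreover have "eta \<le> (\<Sum>J\<in>CJ. 2 ^ (card J + 1) * 2 powr (real n * (Ef J - Ef {} + eps * (Kf J + Kf {}) - (\<Sum>j\<in>J. r j))))"
    unfolding eta_def
  proof (intro sum_mono)
    fix J assume J: "J \<in> CJ"
    hence Jk: "J \<subseteq> {1..k}" by (auto simp: CJ_def)
    define R where "R = 2 powr (real n * (\<Sum>j\<in>J. r j))"
    have Rpos: "R > 0" by (simp add: R_def)
    have PL: "(\<Prod>j\<in>J. real (L j)) \<ge> R / 2 ^ card J" using prod_L_lb[OF L_def r0 Jk] by (simp add: R_def)
    have D: "tau * (\<Prod>j\<in>J. real (L j)) \<ge> (E0 / 2) * (R / 2 ^ card J)"
      using tau_lb2 PL E0pos Rpos by (intro mult_mono) auto
    have Dpos: "(E0 / 2) * (R / 2 ^ card J) > 0" using E0pos Rpos by simp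
    have "Bnd J / (tau * (\<Prod>j\<in>J. real (L j))) \<le> Bnd J / ((E0 / 2) * (R / 2 ^ card J))"
    proof (rule divide_left_mono)
      show "(E0 / 2) * (R / 2 ^ card J) \<le> tau * (\<Prod>j\<in>J. real (L j))" by (rule D)
      show "0 \<le> Bnd J" by (simp add: Bnd_def)
      have "tau * (\<Prod>j\<in>J. real (L j)) > 0" using D Dpos by linarith
      thus "0 < tau * (\<Prod>j\<in>J. real (L j)) * ((E0 / 2) * (R / 2 ^ card J))" using Dpos by (rule mult_pos_pos)
    qed
    also have "\<dots> = 2 ^ (card J + 1) * (Bnd J / (E0 * R))"
      by (simp add: field_simps)
    also have "Bnd J / (E0 * R) = 2 powr (real n * (Ef J - Ef {} + eps * (Kf J + Kf {}) - (\<Sum>j\<in>J. r j)))"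
      unfolding Bnd_def E0_def R_def by (simp add: powr_diff[symmetric] powr_add[symmetric] algebra_simps)
    finally show "Bnd J / (tau * (\<Prod>j\<in>J. real (L j)))
        \<le> 2 ^ (card J + 1) * 2 powr (real n * (Ef J - Ef {} + eps * (Kf J + Kf {}) - (\<Sum>j\<in>J. r j)))" .
  qed
  ultimately show ?thesis by linarith
qed

end

lemma powr_neg_lim:
  assumes "g > (0::real)"
  shows "(\<lambda>n. 2 powr (- (real n * g))) \<longlonglongrightarrow> 0"
proof -
  have "2 powr (- g) < 2 powr 0" by (rule powr_less_mono) (use assms in auto)
  hence "2 powr (- g) < 1" by simp
  hence "(\<lambda>n. (2 powr (- g)) ^ n) \<longlonglongrightarrow> 0"
    by (intro LIMSEQ_power_zero) simp
  moreover have "(2 powr (- g)) ^ n = 2 powr (- (real n * g))" for n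
    by (simp add: powr_realpow[symmetric] powr_powr mult.commute)
  ultimately show ?thesis by simp
qed

lemma main_lb:
  fixes p :: "('u::finite \<times> (nat \<Rightarrow> 'v::finite)) pmf"
    and k :: nat and A :: "nat \<Rightarrow> nat set" and G :: "'v codebook pmf" and r :: "nat \<Rightarrow> real"
  assumes A_sub: "\<forall>j\<in>{1..k}. A j \<subseteq> {1..<j}"
    and A_cl: "\<forall>j\<in>{1..k}. \<forall>i\<in>A j. A i \<subseteq> A j"
    and typ0: "(\<lambda>i. (us i, vs i)) \<in> typical (map_pmf (\<lambda>(u, v). (u, v 0)) p) eps' n"
    and eps: "0 < eps'" "eps' < eps" and npos: "n > 0"
    and r0: "\<forall>j\<in>{1..k}. r j \<ge> 0"
    and Ghyp: "\<forall>m\<in>msgs (\<lambda>j. num_msgs (r j) n) k. \<forall>m'\<in>msgs (\<lambda>j. num_msgs (r j) n) k.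
       map_pmf (\<lambda>c. (codewords A k n c m, codewords A k n c m')) G
     = map_pmf (\<lambda>c. (codewords A k n c m, codewords A k n c m')) (canon_cb p A (\<lambda>j. num_msgs (r j) n) n vs k)"
    and big: "(\<Sum>a\<in>set_pmf (marg_UV p {0..k}). 1 / (real n * (eps - eps')^2 * (pmf (marg_UV p {0..k}) a)^2)) \<le> 1/2"
  shows "measure G {c. \<exists>m\<in>msgs (\<lambda>j. num_msgs (r j) n) k. joint_seq A k us vs c m \<in> typical (marg_UV p {0..k}) eps n}
    \<ge> 1 - (\<Sum>J\<in>{J. J \<subseteq> {1..k} \<and> J \<noteq> {} \<and> (\<forall>j\<in>J. A j \<subseteq> J)}. 2 ^ (card J + 1) *
          2 powr (real n * ((\<Sum>a\<in>set_pmf (marg_UV p {0..k}). pmf (marg_UV p {0..k}) a * (fJ p A k J a - fJ p A k {} a))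
             + eps * ((\<Sum>a\<in>set_pmf (marg_UV p {0..k}). pmf (marg_UV p {0..k}) a * \<bar>fJ p A k J a\<bar>)
                     + (\<Sum>a\<in>set_pmf (marg_UV p {0..k}). pmf (marg_UV p {0..k}) a * \<bar>fJ p A k {} a\<bar>))
             - (\<Sum>j\<in>J. r j))))"
proof -
  interpret E: Eloc p k us vs n eps eps' A "\<lambda>j. num_msgs (r j) n"
    using A_sub A_cl typ0 eps npos by unfold_locales auto
  have half: "(\<Sum>x\<in>{x\<in>E.PS. E.typc x}. E.W x) \<ge> 1/2" using E.typ_lb big by linarith
  have "measure G {c. \<exists>m\<in>msgs (\<lambda>j. num_msgs (r j) n) k. E.Xm m c}
    \<ge> 1 - (\<Sum>J\<in>E.CJ. 2 ^ (card J + 1) * 2 powr (real n * (E.Ef J - E.Ef {} + eps * (E.Kf J + E.Kf {}) - (\<Sum>j\<in>J. r j))))"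
    by (rule E.succ_lb[OF refl r0 Ghyp half])
  moreover have "E.Ef J - E.Ef {} = (\<Sum>a\<in>set_pmf (marg_UV p {0..k}). pmf (marg_UV p {0..k}) a * (fJ p A k J a - fJ p A k {} a))" for J
    by (simp add: E.Ef_def sum_subtractf right_diff_distrib)
  ultimately show ?thesis by (simp add: E.Xm_def E.CJ_def E.Kf_def)
qed

theorem lemma1:
  fixes p :: "('u::finite \<times> (nat \<Rightarrow> 'v::finite)) pmf"
    and k :: nat and A :: "nat \<Rightarrow> nat set"
  assumes "k \<ge> 1"
    and "\<forall>j\<in>{1..k}. A j \<subseteq> {1..<j}"
    and "\<forall>j\<in>{1..k}. \<forall>i\<in>A j. A i \<subseteq> A j"
  shows "\<exists>\<delta>::real \<Rightarrow> real. (\<delta> \<longlongrightarrow> 0) (at_right 0) \<and>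
    (\<forall>(\<epsilon>::real) (\<epsilon>'::real) (r::nat \<Rightarrow> real)
       (Q::nat \<Rightarrow> ((nat \<Rightarrow> 'u) \<times> (nat \<Rightarrow> 'v)) pmf)
       (G::nat \<Rightarrow> (nat \<Rightarrow> 'v) \<Rightarrow> 'v codebook pmf).
      0 < \<epsilon>' \<and> \<epsilon>' < \<epsilon> \<and> \<epsilon> < 1 \<and> (\<forall>j\<in>{1..k}. r j \<ge> 0)
      \<and> (\<forall>n vs. \<forall>m\<in>msgs (\<lambda>j. num_msgs (r j) n) k. \<forall>m'\<in>msgs (\<lambda>j. num_msgs (r j) n) k.
            map_pmf (\<lambda>c. (codewords A k n c m, codewords A k n c m')) (G n vs)
          = map_pmf (\<lambda>c. (codewords A k n c m, codewords A k n c m'))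
              (canon_cb p A (\<lambda>j. num_msgs (r j) n) n vs k))
      \<and> (\<lambda>n. measure_pmf.prob (Q n)
              {(us, vs). (\<lambda>i. (us i, vs i)) \<in> typical (map_pmf (\<lambda>(u, v). (u, v 0)) p) \<epsilon>' n})
          \<longlonglongrightarrow> 1
      \<and> (\<forall>J. J \<noteq> {} \<and> J \<subseteq> {1..k} \<and> (\<forall>j\<in>J. A j \<subseteq> J) \<longrightarrow>
            (\<Sum>j\<in>J. r j) > (\<Sum>j\<in>J. cond_ent_j p A j) - cond_ent_J p J + \<delta> \<epsilon>)
      \<longrightarrow> (\<lambda>n. measure_pmf.prob
              (Q n \<bind> (\<lambda>(us, vs). map_pmf (\<lambda>c. (us, vs, c)) (G n vs)))
              {(us, vs, c). \<exists>m\<in>msgs (\<lambda>j. num_msgs (r j) n) k.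
                 joint_seq A k us vs c m \<in> typical (marg_UV p {0..k}) \<epsilon> n})
          \<longlonglongrightarrow> 1)"
proof -
  let ?pF = "marg_UV p {0..k}"
  let ?SF = "set_pmf (marg_UV p {0..k})"
  define KF where "KF J = (\<Sum>a\<in>?SF. pmf ?pF a * \<bar>fJ p A k J a\<bar>)" for J
  define EE where "EE J = (\<Sum>a\<in>?SF. pmf ?pF a * (fJ p A k J a - fJ p A k {} a))" for J
  define D where "D = (\<Sum>J\<in>Pow {1..k}. KF J + KF {}) + 1"
  have KF0: "KF J \<ge> 0" for J unfolding KF_def by (intro sum_nonneg) auto
  have Dge: "KF J + KF {} + 1 \<le> D" if "J \<subseteq> {1..k}" for J
  proof -
    have "KF J + KF {} \<le> (\<Sum>J\<in>Pow {1..k}. KF J + KF {})"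
      using that KF0 by (intro member_le_sum[where f="\<lambda>J. KF J + KF {}"]) (auto intro: add_nonneg_nonneg)
    thus ?thesis by (simp add: D_def)
  qed
  have Ak: "\<forall>j\<in>{1..k}. A j \<subseteq> {1..k}" using assms(2) by fastforce
  show ?thesis
  proof (intro exI[of _ "\<lambda>e. e * D"] conjI allI impI)
    have "((\<lambda>e::real. e * D) \<longlongrightarrow> 0 * D) (at_right 0)" by (intro tendsto_intros)
    thus "((\<lambda>e::real. e * D) \<longlongrightarrow> 0) (at_right 0)" by simp
  next
    fix eps eps' :: real and r :: "nat \<Rightarrow> real"
      and Q :: "nat \<Rightarrow> ((nat \<Rightarrow> 'u) \<times> (nat \<Rightarrow> 'v)) pmf"
      and G :: "nat \<Rightarrow> (nat \<Rightarrow> 'v) \<Rightarrow> 'v codebook pmf"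
    assume H: "0 < eps' \<and> eps' < eps \<and> eps < 1 \<and> (\<forall>j\<in>{1..k}. r j \<ge> 0)
      \<and> (\<forall>n vs. \<forall>m\<in>msgs (\<lambda>j. num_msgs (r j) n) k. \<forall>m'\<in>msgs (\<lambda>j. num_msgs (r j) n) k.
            map_pmf (\<lambda>c. (codewords A k n c m, codewords A k n c m')) (G n vs)
          = map_pmf (\<lambda>c. (codewords A k n c m, codewords A k n c m'))
              (canon_cb p A (\<lambda>j. num_msgs (r j) n) n vs k))
      \<and> (\<lambda>n. measure_pmf.prob (Q n)
              {(us, vs). (\<lambda>i. (us i, vs i)) \<in> typical (map_pmf (\<lambda>(u, v). (u, v 0)) p) eps' n})
          \<longlonglongrightarrow> 1
      \<and> (\<forall>J. J \<noteq> {} \<and> J \<subseteq> {1..k} \<and> (\<forall>j\<in>J. A j \<subseteq> J) \<longrightarrow>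
            (\<Sum>j\<in>J. r j) > (\<Sum>j\<in>J. cond_ent_j p A j) - cond_ent_J p J + eps * D)"
    hence e: "0 < eps'" "eps' < eps" and r0: "\<forall>j\<in>{1..k}. r j \<ge> 0"
      and Ghyp: "\<And>n vs. \<forall>m\<in>msgs (\<lambda>j. num_msgs (r j) n) k. \<forall>m'\<in>msgs (\<lambda>j. num_msgs (r j) n) k.
            map_pmf (\<lambda>c. (codewords A k n c m, codewords A k n c m')) (G n vs)
          = map_pmf (\<lambda>c. (codewords A k n c m, codewords A k n c m'))
              (canon_cb p A (\<lambda>j. num_msgs (r j) n) n vs k)"
      and Qlim: "(\<lambda>n. measure_pmf.prob (Q n)
              {(us, vs). (\<lambda>i. (us i, vs i)) \<in> typical (map_pmf (\<lambda>(u, v). (u, v 0)) p) eps' n})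
          \<longlonglongrightarrow> 1"
      and rate: "\<And>J. J \<noteq> {} \<Longrightarrow> J \<subseteq> {1..k} \<Longrightarrow> (\<forall>j\<in>J. A j \<subseteq> J) \<Longrightarrow>
            (\<Sum>j\<in>J. r j) > (\<Sum>j\<in>J. cond_ent_j p A j) - cond_ent_J p J + eps * D"
      by auto
    define CJs where "CJs = {J. J \<subseteq> {1..k} \<and> J \<noteq> {} \<and> (\<forall>j\<in>J. A j \<subseteq> J)}"
    have finCJ: "finite CJs" by (rule finite_subset[of _ "Pow {1..k}"]) (auto simp: CJs_def)
    define gam where "gam J = (\<Sum>j\<in>J. r j) - EE J - eps * (KF J + KF {})" for J
    have gpos: "gam J > 0" if J: "J \<in> CJs" for J
    proof -
      have Jk: "J \<subseteq> {1..k}" using J by (auto simp: CJs_def)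
      have "EE J = (\<Sum>j\<in>J. cond_ent_j p A j) - cond_ent_J p J"
        unfolding EE_def by (rule E1[OF Jk Ak])
      moreover have "(\<Sum>j\<in>J. r j) > (\<Sum>j\<in>J. cond_ent_j p A j) - cond_ent_J p J + eps * D"
        using J rate by (auto simp: CJs_def)
      moreover have "eps * (KF J + KF {} + 1) \<le> eps * D" using Dge[OF Jk] e by (intro mult_left_mono) auto
      ultimately show ?thesis unfolding gam_def using e by (simp add: algebra_simps)
    qed
    define eta where "eta n = (\<Sum>J\<in>CJs. 2 ^ (card J + 1) * 2 powr (- (real n * gam J)))" for n :: nat
    have eta_lim: "eta \<longlonglongrightarrow> 0"
      unfolding eta_def
      by (intro tendsto_null_sum tendsto_mult_right_zero powr_neg_lim gpos)
    define C where "C = (\<Sum>a\<in>?SF. 1 / ((eps - eps')^2 * (pmf ?pF a)^2))"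
    define Qt where "Qt n = measure_pmf.prob (Q n)
              {(us, vs). (\<lambda>i. (us i, vs i)) \<in> typical (map_pmf (\<lambda>(u, v). (u, v 0)) p) eps' n}" for n
    define Pn where "Pn n = measure_pmf.prob
              (Q n \<bind> (\<lambda>(us, vs). map_pmf (\<lambda>c. (us, vs, c)) (G n vs)))
              {(us, vs, c). \<exists>m\<in>msgs (\<lambda>j. num_msgs (r j) n) k.
                 joint_seq A k us vs c m \<in> typical (marg_UV p {0..k}) eps n}" for n
    define inner where "inner n x = measure (G n (snd x)) {c. \<exists>m\<in>msgs (\<lambda>j. num_msgs (r j) n) k.
                 joint_seq A k (fst x) (snd x) c m \<in> typical (marg_UV p {0..k}) eps n}" for n x
    have Pn_eq: "Pn n = (\<integral>x. inner n x \<partial>Q n)" for n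
    proof -
      have "Pn n = (\<integral>x. measure ((\<lambda>(us, vs). map_pmf (\<lambda>c. (us, vs, c)) (G n vs)) x)
          {(us, vs, c). \<exists>m\<in>msgs (\<lambda>j. num_msgs (r j) n) k.
                 joint_seq A k us vs c m \<in> typical (marg_UV p {0..k}) eps n} \<partial>Q n)"
        unfolding Pn_def by (rule measure_bind_pmf')
      also have "\<dots> = (\<integral>x. inner n x \<partial>Q n)"
        by (intro Bochner_Integration.integral_cong refl)
           (auto simp: inner_def case_prod_unfold measure_map_pmf vimage_def)
      finally show ?thesis .
    qed
    have lb: "Pn n \<ge> (1 - eta n) * Qt n" if n: "n > 0" "real n \<ge> 2 * C" for n
    proof -
      define T where "T = {(us, vs). (\<lambda>i. (us i, vs i)) \<in> typical (map_pmf (\<lambda>(u, v). (u, v 0)) p) eps' n}"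
      have pw: "indicator T x * (1 - eta n) \<le> inner n x" for x
      proof (cases "x \<in> T")
        case False
        thus ?thesis by (simp add: inner_def)
      next
        case True
        obtain us vs where x: "x = (us, vs)" by (cases x)
        have typ0: "(\<lambda>i. (us i, vs i)) \<in> typical (map_pmf (\<lambda>(u, v). (u, v 0)) p) eps' n"
          using True by (simp add: T_def x)
        have big: "(\<Sum>a\<in>?SF. 1 / (real n * (eps - eps')^2 * (pmf ?pF a)^2)) \<le> 1/2"
        proof -
          have "(\<Sum>a\<in>?SF. 1 / (real n * (eps - eps')^2 * (pmf ?pF a)^2)) = C / real n"
            unfolding C_def sum_divide_distrib by (intro sum.cong refl) (simp add: field_simps)
          also have "\<dots> \<le> 1/2"
          proof -
            have "C \<ge> 0" unfolding C_def by (intro sum_nonneg) auto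
            thus ?thesis using n by (simp add: divide_le_eq field_simps)
          qed
          finally show ?thesis .
        qed
        have "inner n x \<ge> 1 - (\<Sum>J\<in>CJs. 2 ^ (card J + 1) *
          2 powr (real n * (EE J + eps * (KF J + KF {}) - (\<Sum>j\<in>J. r j))))"
          unfolding inner_def x fst_conv snd_conv EE_def KF_def CJs_def
          by (rule main_lb[OF assms(2,3) typ0 e n(1) r0 Ghyp big])
        also have "(\<Sum>J\<in>CJs. 2 ^ (card J + 1) * 2 powr (real n * (EE J + eps * (KF J + KF {}) - (\<Sum>j\<in>J. r j))))
            = eta n"
          unfolding eta_def by (intro sum.cong refl) (simp add: gam_def algebra_simps)
        finally show ?thesis using True by simp
      qed
      have "(1 - eta n) * Qt n = (\<integral>x. indicator T x * (1 - eta n) \<partial>Q n)"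
        by (simp add: Qt_def T_def)
      also have "\<dots> \<le> (\<integral>x. inner n x \<partial>Q n)"
      proof (rule integral_mono[OF _ _ pw])
        show "integrable (Q n) (\<lambda>x. indicator T x * (1 - eta n))"
          by (rule integrable_bounded_pmf[where B="\<bar>1 - eta n\<bar>"]) (simp add: indicator_def)
        show "integrable (Q n) (inner n)"
          by (rule integrable_bounded_pmf[where B=1]) (simp add: inner_def)
      qed
      finally show ?thesis using Pn_eq by simp
    qed
    have ub: "Pn n \<le> 1" for n by (simp add: Pn_def)
    have lim1: "(\<lambda>n. (1 - eta n) * Qt n) \<longlonglongrightarrow> (1 - 0) * 1"
      using eta_lim Qlim unfolding Qt_def by (intro tendsto_intros)
    have ev: "eventually (\<lambda>n. (1 - eta n) * Qt n \<le> Pn n) sequentially"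
    proof -
      obtain N :: nat where N: "real N \<ge> 2 * C" using real_arch_simple by blast
      show ?thesis
        by (rule eventually_sequentiallyI[of "Suc N"]) (rule lb, use N in auto)
    qed
    have "Pn \<longlonglongrightarrow> 1"
      by (rule tendsto_sandwich[OF ev _ _ tendsto_const]) (use lim1 ub in auto)
    thus "(\<lambda>n. measure_pmf.prob
              (Q n \<bind> (\<lambda>(us, vs). map_pmf (\<lambda>c. (us, vs, c)) (G n vs)))
              {(us, vs, c). \<exists>m\<in>msgs (\<lambda>j. num_msgs (r j) n) k.
                 joint_seq A k us vs c m \<in> typical (marg_UV p {0..k}) eps n})
          \<longlonglongrightarrow> 1" unfolding Pn_def .
  qed
qed

end
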